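(* Let $(X_A,\sigma_A)$ and $(X_B,\sigma_B)$ be one-sided topological Markov shifts (with $A$, $B$ as in the context). Then $(X_A,\sigma_A)$ and $(X_B,\sigma_B)$ are one-sided flow equivalent if and only if they are continuously orbit equivalent.
   Context: Let $N>1$ and let $A=[A(i,j)]_{i,j=1}^N$ be an irreducible matrix with entries in $\{0,1\}$ which is not a permutation matrix; likewise let $B$ be an $M\times M$ matrix ($M>1$) with the same properties. The one-sided topological Markov shift $(X_A,\sigma_A)$ consists of the compact space $X_A$ of all sequences $(x_n)_{n\in\mathbb N}$ with $x_n\in\{1,\dots,N\}$ and $A(x_n,x_{n+1})=1$ for all $n$ (product topology), with the shift map $\sigma_A((x_n)_{n\in\mathbb N})=(x_{n+1})_{n\in\mathbb N}$; similarly $(X_B,\sigma_B)$. $\mathbb Z_+$, $\mathbb R_+$ denote nonnegative integers and nonnegative reals. Cohomology: $H^A$ is the quotient of the group $C(X_A,\mathbb Z)$ of continuous integer-valued functions by the subgroup $\{g-g\circ\sigma_A : g\in C(X_A,\mathbb Z)\}$; $[f]$ denotes the class of $f$; $H^A_+=\{[f]: f\in C(X_A,\mathbb Z_+)\}$. An element $[f]\in H^A_+$ is an order unit if for every $[g]\in H^A$ there is $n\in\mathbb N$ with $n[f]-[g]\in H^A_+$. For a function $f$ on $X_A$ and $m\in\mathbb Z_+$, $f^m(x)=\sum_{i=0}^{m-1}f(\sigma_A^i(x))$. Same notions for $B$. Suspension triplet: a triple $(l,k,b)$ with $l,k\in C(X_A,\mathbb R_+)$, $b\in C(X_A,\mathbb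 R)$ such that (1) $c:=l-k$ is integer-valued and $[c]\in H^A_+$ is an order unit, and (2) $l-b$ and $k-b\circ\sigma_A$ take values in $\mathbb Z_+$. Let $X^{\mathbb R}_{A,b}=\{(x,r)\in X_A\times\mathbb R: r\ge b(x)\}$ and let $\sim_{l,k}$ be the equivalence relation on it generated by $(x,r)\sim_{l,k}(\sigma_A(x),r-c(x))$ whenever $r\ge l(x)$. The one-sided suspension $S^{l,k}_{A,b}$ is the quotient space $X^{\mathbb R}_{A,b}/\!\sim_{l,k}$, with $[x,r]$ the class of $(x,r)$, equipped with the flow $\phi_{A,t}([x,r])=[x,r+t]$, $t\in\mathbb R_+$, and base map $b_A:X_A\to S^{l,k}_{A,b}$, $b_A(x)=[x,b(x)]$. The standard suspension is $S^1_A:=S^{1,0}_{A,0}$ (triplet $(1,0,0)$) with standard base map $s_A(x)=[x,0]$. One-sided flow equivalence: $(X_A,\sigma_A)$ and $(X_B,\sigma_B)$ are one-sided flow equivalent if there exist suspension triplets $(l_1,k_1,b_1)$ for $(X_A,\sigma_A)$ and $(l_2,k_2,b_2)$ for $(X_B,\sigma_B)$, a homeomorphism $h:X_A\to X_B$ and continuous maps $\Phi_1:S^{l_1,k_1}_{A,b_1}\to S^1_B$, $\Phi_2:S^{l_2,k_2}_{B,b_2}\to S^1_A$ with $\Phi_1\circ\phi_{A,t}=\phi_{B,t}\circ\Phi_1$, $\Phi_2\circ\phi_{B,t}=\phi_{A,t}\circ\Phi_2$ for all $t\in\mathbb R_+$, $\Phi_1\circ b_{1,A}=s_B\circ h$ and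 $\Phi_2\circ b_{2,B}=s_A\circ h^{-1}$, where $b_{1,A}(x)=[x,b_1(x)]$ and $b_{2,B}(y)=[y,b_2(y)]$. Continuous orbit equivalence: there exist a homeomorphism $h:X_A\to X_B$ and continuous $k_1,l_1:X_A\to\mathbb Z_+$, $k_2,l_2:X_B\to\mathbb Z_+$ with $\sigma_B^{k_1(x)}(h(\sigma_A(x)))=\sigma_B^{l_1(x)}(h(x))$ for all $x\in X_A$ and $\sigma_A^{k_2(y)}(h^{-1}(\sigma_B(y)))=\sigma_A^{l_2(y)}(h^{-1}(y))$ for all $y\in X_B$. *)

theory Defs
  imports "HOL-Analysis.Analysis"
begin

text \<open>An N x N matrix is represented as a function nat => nat => nat, indices in {1..N}.\<close>

fun mat_pow :: "nat \<Rightarrow> (nat \<Rightarrow> nat \<Rightarrow> nat) \<Rightarrow> nat \<Rightarrow> nat \<Rightarrow> nat \<Rightarrow> nat" where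
  "mat_pow N A 0 i j = (if i = j then 1 else 0)"
| "mat_pow N A (Suc n) i j = (\<Sum>m\<in>{1..N}. mat_pow N A n i m * A m j)"

definition zero_one_matrix :: "nat \<Rightarrow> (nat \<Rightarrow> nat \<Rightarrow> nat) \<Rightarrow> bool" where
  "zero_one_matrix N A \<longleftrightarrow> (\<forall>i\<in>{1..N}. \<forall>j\<in>{1..N}. A i j \<in> {0,1})"

definition irreducible_matrix :: "nat \<Rightarrow> (nat \<Rightarrow> nat \<Rightarrow> nat) \<Rightarrow> bool" where
  "irreducible_matrix N A \<longleftrightarrow> (\<forall>i\<in>{1..N}. \<forall>j\<in>{1..N}. \<exists>n>0. mat_pow N A n i j > 0)"

definition permutation_matrix :: "nat \<Rightarrow> (nat \<Rightarrow> nat \<Rightarrow> nat) \<Rightarrow> bool" where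
  "permutation_matrix N A \<longleftrightarrow> zero_one_matrix N A \<and>
     (\<forall>i\<in>{1..N}. card {j\<in>{1..N}. A i j = 1} = 1) \<and>
     (\<forall>j\<in>{1..N}. card {i\<in>{1..N}. A i j = 1} = 1)"

definition admissible_matrix :: "nat \<Rightarrow> (nat \<Rightarrow> nat \<Rightarrow> nat) \<Rightarrow> bool" where
  "admissible_matrix N A \<longleftrightarrow> N > 1 \<and> zero_one_matrix N A \<and> irreducible_matrix N A
     \<and> \<not> permutation_matrix N A"

text \<open>The shift space X_A, a subset of nat => nat carrying the product topology
  (nat is discrete).\<close>
definition shift_space :: "nat \<Rightarrow> (nat \<Rightarrow> nat \<Rightarrow> nat) \<Rightarrow> (nat \<Rightarrow> nat) set" where
  "shift_space N A = {x. \<forall>n. x n \<in> {1..N} \<and> A (x n) (x (Suc n)) = 1}"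

definition shift :: "(nat \<Rightarrow> nat) \<Rightarrow> (nat \<Rightarrow> nat)" where
  "shift x = (\<lambda>n. x (Suc n))"

definition cohomologous :: "(nat \<Rightarrow> nat) set \<Rightarrow> ((nat \<Rightarrow> nat) \<Rightarrow> int) \<Rightarrow> ((nat \<Rightarrow> nat) \<Rightarrow> int) \<Rightarrow> bool" where
  "cohomologous X f g \<longleftrightarrow>
     (\<exists>u. continuous_on X u \<and> (\<forall>x\<in>X. f x - g x = u x - u (shift x)))"

definition in_pos_cone :: "(nat \<Rightarrow> nat) set \<Rightarrow> ((nat \<Rightarrow> nat) \<Rightarrow> int) \<Rightarrow> bool" where
  "in_pos_cone X f \<longleftrightarrow>
     (\<exists>g. continuous_on X g \<and> (\<forall>x\<in>X. g x \<ge> 0) \<and> cohomologous X f g)"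

definition order_unit :: "(nat \<Rightarrow> nat) set \<Rightarrow> ((nat \<Rightarrow> nat) \<Rightarrow> int) \<Rightarrow> bool" where
  "order_unit X f \<longleftrightarrow> continuous_on X f \<and> in_pos_cone X f \<and>
     (\<forall>g. continuous_on X g \<longrightarrow> (\<exists>n::nat. in_pos_cone X (\<lambda>x. int n * f x - g x)))"

definition susp_triplet ::
  "(nat \<Rightarrow> nat) set \<Rightarrow> ((nat \<Rightarrow> nat) \<Rightarrow> real) \<Rightarrow> ((nat \<Rightarrow> nat) \<Rightarrow> real) \<Rightarrow> ((nat \<Rightarrow> nat) \<Rightarrow> real) \<Rightarrow> bool" where
  "susp_triplet X l k b \<longleftrightarrow>
     continuous_on X l \<and> continuous_on X k \<and> continuous_on X b \<and>
     (\<forall>x\<in>X. l x \<ge> 0 \<and> k x \<ge> 0) \<and>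
     (\<exists>c. (\<forall>x\<in>X. l x - k x = of_int (c x)) \<and> order_unit X c) \<and>
     (\<forall>x\<in>X. l x - b x \<in> \<nat> \<and> k x - b (shift x) \<in> \<nat>)"

definition susp_domain :: "(nat \<Rightarrow> nat) set \<Rightarrow> ((nat \<Rightarrow> nat) \<Rightarrow> real) \<Rightarrow> ((nat \<Rightarrow> nat) \<times> real) set" where
  "susp_domain X b = {(x, r). x \<in> X \<and> r \<ge> b x}"

definition susp_gen ::
  "(nat \<Rightarrow> nat) set \<Rightarrow> ((nat \<Rightarrow> nat) \<Rightarrow> real) \<Rightarrow> ((nat \<Rightarrow> nat) \<Rightarrow> real) \<Rightarrow> ((nat \<Rightarrow> nat) \<Rightarrow> real)
   \<Rightarrow> (((nat \<Rightarrow> nat) \<times> real) \<times> ((nat \<Rightarrow> nat) \<times> real)) set" where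
  "susp_gen X l k b = {((x, r), (shift x, r - (l x - k x))) | x r. (x, r) \<in> susp_domain X b \<and> r \<ge> l x}"

definition susp_rel ::
  "(nat \<Rightarrow> nat) set \<Rightarrow> ((nat \<Rightarrow> nat) \<Rightarrow> real) \<Rightarrow> ((nat \<Rightarrow> nat) \<Rightarrow> real) \<Rightarrow> ((nat \<Rightarrow> nat) \<Rightarrow> real)
   \<Rightarrow> (((nat \<Rightarrow> nat) \<times> real) \<times> ((nat \<Rightarrow> nat) \<times> real)) set" where
  "susp_rel X l k b = ((susp_gen X l k b \<union> (susp_gen X l k b)\<inverse>)\<^sup>*) \<inter> (susp_domain X b \<times> susp_domain X b)"

definition quotient_top :: "'a::topological_space set \<Rightarrow> ('a \<times> 'a) set \<Rightarrow> 'a set topology" where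
  "quotient_top S E = topology (\<lambda>U. U \<subseteq> S // E \<and> openin (top_of_set S) (\<Union>U))"

text \<open>The one-sided suspension S^{l,k}_{A,b} as a topological space (points = equivalence classes).\<close>
definition suspension ::
  "(nat \<Rightarrow> nat) set \<Rightarrow> ((nat \<Rightarrow> nat) \<Rightarrow> real) \<Rightarrow> ((nat \<Rightarrow> nat) \<Rightarrow> real) \<Rightarrow> ((nat \<Rightarrow> nat) \<Rightarrow> real)
   \<Rightarrow> ((nat \<Rightarrow> nat) \<times> real) set topology" where
  "suspension X l k b = quotient_top (susp_domain X b) (susp_rel X l k b)"

definition susp_class ::
  "(nat \<Rightarrow> nat) set \<Rightarrow> ((nat \<Rightarrow> nat) \<Rightarrow> real) \<Rightarrow> ((nat \<Rightarrow> nat) \<Rightarrow> real) \<Rightarrow> ((nat \<Rightarrow> nat) \<Rightarrow> real)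
   \<Rightarrow> (nat \<Rightarrow> nat) \<Rightarrow> real \<Rightarrow> ((nat \<Rightarrow> nat) \<times> real) set" where
  "susp_class X l k b x r = susp_rel X l k b `` {(x, r)}"

text \<open>The flow phi_t([x,r]) = [x,r+t], applied to a class p (well defined: the result is the
  class of (x, r+t) for any representative (x,r) of p).\<close>
definition susp_flow ::
  "(nat \<Rightarrow> nat) set \<Rightarrow> ((nat \<Rightarrow> nat) \<Rightarrow> real) \<Rightarrow> ((nat \<Rightarrow> nat) \<Rightarrow> real) \<Rightarrow> ((nat \<Rightarrow> nat) \<Rightarrow> real)
   \<Rightarrow> real \<Rightarrow> ((nat \<Rightarrow> nat) \<times> real) set \<Rightarrow> ((nat \<Rightarrow> nat) \<times> real) set" where
  "susp_flow X l k b t p = susp_rel X l k b `` ((\<lambda>(x, r). (x, r + t)) ` p)"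

abbreviation std_susp :: "(nat \<Rightarrow> nat) set \<Rightarrow> ((nat \<Rightarrow> nat) \<times> real) set topology" where
  "std_susp X \<equiv> suspension X (\<lambda>_. 1) (\<lambda>_. 0) (\<lambda>_. 0)"

abbreviation std_flow :: "(nat \<Rightarrow> nat) set \<Rightarrow> real \<Rightarrow> ((nat \<Rightarrow> nat) \<times> real) set \<Rightarrow> ((nat \<Rightarrow> nat) \<times> real) set" where
  "std_flow X \<equiv> susp_flow X (\<lambda>_. 1) (\<lambda>_. 0) (\<lambda>_. 0)"

abbreviation std_base :: "(nat \<Rightarrow> nat) set \<Rightarrow> (nat \<Rightarrow> nat) \<Rightarrow> ((nat \<Rightarrow> nat) \<times> real) set" where
  "std_base X x \<equiv> susp_class X (\<lambda>_. 1) (\<lambda>_. 0) (\<lambda>_. 0) x 0"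

definition one_sided_flow_equiv ::
  "nat \<Rightarrow> (nat \<Rightarrow> nat \<Rightarrow> nat) \<Rightarrow> nat \<Rightarrow> (nat \<Rightarrow> nat \<Rightarrow> nat) \<Rightarrow> bool" where
  "one_sided_flow_equiv N A M B \<longleftrightarrow>
    (let XA = shift_space N A; XB = shift_space M B in
     \<exists>l1 k1 b1 l2 k2 b2 h h' \<Phi>1 \<Phi>2.
       susp_triplet XA l1 k1 b1 \<and> susp_triplet XB l2 k2 b2 \<and>
       homeomorphism XA XB h h' \<and>
       continuous_map (suspension XA l1 k1 b1) (std_susp XB) \<Phi>1 \<and>
       continuous_map (suspension XB l2 k2 b2) (std_susp XA) \<Phi>2 \<and>
       (\<forall>t\<ge>0. \<forall>p\<in>topspace (suspension XA l1 k1 b1).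
          \<Phi>1 (susp_flow XA l1 k1 b1 t p) = std_flow XB t (\<Phi>1 p)) \<and>
       (\<forall>t\<ge>0. \<forall>p\<in>topspace (suspension XB l2 k2 b2).
          \<Phi>2 (susp_flow XB l2 k2 b2 t p) = std_flow XA t (\<Phi>2 p)) \<and>
       (\<forall>x\<in>XA. \<Phi>1 (susp_class XA l1 k1 b1 x (b1 x)) = std_base XB (h x)) \<and>
       (\<forall>y\<in>XB. \<Phi>2 (susp_class XB l2 k2 b2 y (b2 y)) = std_base XA (h' y)))"

definition cont_orbit_equiv ::
  "nat \<Rightarrow> (nat \<Rightarrow> nat \<Rightarrow> nat) \<Rightarrow> nat \<Rightarrow> (nat \<Rightarrow> nat \<Rightarrow> nat) \<Rightarrow> bool" where
  "cont_orbit_equiv N A M B \<longleftrightarrow>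
    (let XA = shift_space N A; XB = shift_space M B in
     \<exists>h h' (k1 :: (nat \<Rightarrow> nat) \<Rightarrow> nat) l1 (k2 :: (nat \<Rightarrow> nat) \<Rightarrow> nat) l2.
       homeomorphism XA XB h h' \<and>
       continuous_on XA k1 \<and> continuous_on XA l1 \<and>
       continuous_on XB k2 \<and> continuous_on XB l2 \<and>
       (\<forall>x\<in>XA. (shift ^^ k1 x) (h (shift x)) = (shift ^^ l1 x) (h x)) \<and>
       (\<forall>y\<in>XB. (shift ^^ k2 y) (h' (shift y)) = (shift ^^ l2 y) (h' y)))"

end

theory Submission
  imports Defs
begin

lemma quotient_istop:
  assumes "equiv S E"
  shows "istopology (\<lambda>U. U \<subseteq> S // E \<and> openin (top_of_set S) (\<Union>U))"
proof -
  have int: "U \<inter> V \<subseteq> S // E \<and> openin (top_of_set S) (\<Union>(U \<inter> V))"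
    if U: "U \<subseteq> S // E" "openin (top_of_set S) (\<Union>U)"
    and V: "V \<subseteq> S // E" "openin (top_of_set S) (\<Union>V)" for U V
  proof -
    have "(\<Union>U) \<inter> (\<Union>V) \<subseteq> \<Union>(U \<inter> V)"
    proof
      fix z assume "z \<in> (\<Union>U) \<inter> (\<Union>V)"
      then obtain P Q where PQ: "P \<in> U" "Q \<in> V" "z \<in> P" "z \<in> Q" by auto
      with U V quotient_disj[OF assms, of P Q] have "P = Q" by auto
      with PQ show "z \<in> \<Union>(U \<inter> V)" by blast
    qed
    then have "\<Union>(U \<inter> V) = (\<Union>U) \<inter> (\<Union>V)" by auto
    then show ?thesis using U V by auto
  qed
  have un: "\<Union>K \<subseteq> S // E \<and> openin (top_of_set S) (\<Union>(\<Union>K))"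
    if K: "\<forall>U\<in>K. U \<subseteq> S // E \<and> openin (top_of_set S) (\<Union>U)" for K
  proof -
    have "\<Union>(\<Union>K) = \<Union>(Union ` K)" by auto
    moreover have "openin (top_of_set S) (\<Union>(Union ` K))"
      by (rule openin_Union) (use K in auto)
    ultimately show ?thesis using K by auto
  qed
  show ?thesis unfolding istopology_def using int un by blast
qed

lemma openin_quotient_top:
  assumes "equiv S E"
  shows "openin (quotient_top S E) U \<longleftrightarrow> U \<subseteq> S // E \<and> openin (top_of_set S) (\<Union>U)"
  unfolding quotient_top_def using topology_inverse'[OF quotient_istop[OF assms]] by simp

lemma topspace_quotient_top:
  assumes "equiv S E"
  shows "topspace (quotient_top S E) = S // E"
proof -
  have "openin (quotient_top S E) (S // E)"
    using openin_quotient_top[OF assms] Union_quotient[OF assms] by auto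
  then have "S // E \<subseteq> topspace (quotient_top S E)" by (rule openin_subset)
  moreover have "topspace (quotient_top S E) \<subseteq> S // E"
    unfolding topspace_def using openin_quotient_top[OF assms] by auto
  ultimately show ?thesis by auto
qed

lemma susp_rel_equiv: "equiv (susp_domain X b) (susp_rel X l k b)"
proof (rule equivI)
  let ?R = "susp_gen X l k b \<union> (susp_gen X l k b)\<inverse>"
  show "susp_rel X l k b \<subseteq> susp_domain X b \<times> susp_domain X b"
    unfolding susp_rel_def by auto
  show "refl_on (susp_domain X b) (susp_rel X l k b)"
    unfolding susp_rel_def refl_on_def by auto
  have "sym (?R\<^sup>*)" by (rule sym_rtrancl) (auto simp: sym_def)
  then show "sym (susp_rel X l k b)"
    unfolding susp_rel_def by (auto simp: sym_def)
  show "trans (susp_rel X l k b)"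
    unfolding susp_rel_def trans_def by auto
qed

lemma openin_suspension:
  "openin (suspension X l k b) U \<longleftrightarrow> U \<subseteq> susp_domain X b // susp_rel X l k b \<and>
     openin (top_of_set (susp_domain X b)) (\<Union>U)"
  unfolding suspension_def by (rule openin_quotient_top[OF susp_rel_equiv])

lemma topspace_suspension:
  "topspace (suspension X l k b) = susp_domain X b // susp_rel X l k b"
  unfolding suspension_def by (rule topspace_quotient_top[OF susp_rel_equiv])

lemma susp_class_in_top:
  "(x, r) \<in> susp_domain X b \<Longrightarrow> susp_class X l k b x r \<in> topspace (suspension X l k b)"
  unfolding topspace_suspension susp_class_def by (rule quotientI)

lemma susp_class_eq:
  "((x, r), (y, s)) \<in> susp_rel X l k b \<Longrightarrow> susp_class X l k b x r = susp_class X l k b y s"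
  unfolding susp_class_def using equiv_class_eq_iff[OF susp_rel_equiv] by blast

lemma susp_class_self:
  "(x, r) \<in> susp_domain X b \<Longrightarrow> (x, r) \<in> susp_class X l k b x r"
  unfolding susp_class_def by (rule equiv_class_self[OF susp_rel_equiv])

lemma susp_class_mem:
  "p \<in> susp_class X l k b x r \<Longrightarrow> ((x, r), p) \<in> susp_rel X l k b"
  unfolding susp_class_def by auto

lemma susp_shift_rtrancl:
  assumes "(p, q) \<in> (susp_gen X l k b \<union> (susp_gen X l k b)\<inverse>)\<^sup>*" "t \<ge> 0"
  shows "((fst p, snd p + t), (fst q, snd q + t)) \<in> (susp_gen X l k b \<union> (susp_gen X l k b)\<inverse>)\<^sup>*"
  using assms(1)
proof (induction rule: rtrancl_induct)
  case base then show ?case by simp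
next
  case (step y z)
  have "((fst y, snd y + t), (fst z, snd z + t)) \<in> susp_gen X l k b \<union> (susp_gen X l k b)\<inverse>"
    using step(2) assms(2) unfolding susp_gen_def susp_domain_def
    by (auto simp: algebra_simps)
  with step(3) show ?case by (rule rtrancl_into_rtrancl)
qed

lemma susp_rel_shift:
  assumes "((x, r), (y, s)) \<in> susp_rel X l k b" "t \<ge> 0"
  shows "((x, r + t), (y, s + t)) \<in> susp_rel X l k b"
  using susp_shift_rtrancl[of "(x,r)" "(y,s)" X l k b t] assms
  unfolding susp_rel_def susp_domain_def by auto

lemma susp_flow_class:
  assumes "(x, r) \<in> susp_domain X b" "t \<ge> 0"
  shows "susp_flow X l k b t (susp_class X l k b x r) = susp_class X l k b x (r + t)"
proof
  show "susp_class X l k b x (r + t) \<subseteq> susp_flow X l k b t (susp_class X l k b x r)"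
    using susp_class_self[OF assms(1), of l k] unfolding susp_flow_def susp_class_def
    by force
  show "susp_flow X l k b t (susp_class X l k b x r) \<subseteq> susp_class X l k b x (r + t)"
  proof
    fix z assume "z \<in> susp_flow X l k b t (susp_class X l k b x r)"
    then obtain p where p: "p \<in> susp_class X l k b x r"
      "((fst p, snd p + t), z) \<in> susp_rel X l k b"
      unfolding susp_flow_def by (auto simp: case_prod_beta)
    have "((x, r + t), (fst p, snd p + t)) \<in> susp_rel X l k b"
      using susp_rel_shift[of x r "fst p" "snd p", OF _ assms(2)] susp_class_mem[OF p(1)] by simp
    with p(2) have "((x, r + t), z) \<in> susp_rel X l k b"
      using susp_rel_equiv unfolding equiv_def trans_def by blast
    then show "z \<in> susp_class X l k b x (r + t)" unfolding susp_class_def by simp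
  qed
qed


definition std_inv :: "((nat \<Rightarrow> nat) \<times> real) \<Rightarrow> (nat \<Rightarrow> nat) \<times> real" where
  "std_inv p = ((shift ^^ nat \<lfloor>snd p\<rfloor>) (fst p), snd p - of_int \<lfloor>snd p\<rfloor>)"

lemma std_inv_rtrancl:
  assumes "(p, q) \<in> (susp_gen X (\<lambda>_. 1) (\<lambda>_. 0) (\<lambda>_. 0) \<union> (susp_gen X (\<lambda>_. 1) (\<lambda>_. 0) (\<lambda>_. 0))\<inverse>)\<^sup>*"
  shows "std_inv p = std_inv q"
  using assms
proof (induction rule: rtrancl_induct)
  case base then show ?case by simp
next
  case (step y z)
  have edge: "std_inv (x, s) = std_inv (shift x, s - 1)" if "s \<ge> 1" for x s
  proof -
    have f: "\<lfloor>s - 1\<rfloor> = \<lfloor>s\<rfloor> - 1" by simp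
    have s1: "\<lfloor>s\<rfloor> \<ge> 1" using that by simp
    have m: "nat \<lfloor>s\<rfloor> = Suc (nat \<lfloor>s - 1\<rfloor>)" unfolding f
      using Suc_nat_eq_nat_zadd1[of "\<lfloor>s\<rfloor> - 1"] s1 by simp
    show ?thesis unfolding std_inv_def fst_conv snd_conv m f funpow_Suc_right
      by simp
  qed
  from step(2) obtain x s where "s \<ge> 1" "(y = (x, s) \<and> z = (shift x, s - (1 - 0))) \<or> (z = (x, s) \<and> y = (shift x, s - (1 - 0)))"
    unfolding susp_gen_def susp_domain_def by blast
  then have "std_inv y = std_inv z" using edge[of s x] by auto
  with step(3) show ?case by simp
qed

lemma std_inv_rel:
  "(p, q) \<in> susp_rel X (\<lambda>_. 1) (\<lambda>_. 0) (\<lambda>_. 0) \<Longrightarrow> std_inv p = std_inv q"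
  unfolding susp_rel_def using std_inv_rtrancl by blast

lemma std_class_inj:
  assumes "y \<in> X"
    and "susp_class X (\<lambda>_. 1) (\<lambda>_. 0) (\<lambda>_. 0) y (real n) = susp_class X (\<lambda>_. 1) (\<lambda>_. 0) (\<lambda>_. 0) y' (real m)"
  shows "(shift ^^ n) y = (shift ^^ m) y'"
proof -
  have "(y, real n) \<in> susp_domain X (\<lambda>_. 0)" using assms(1) unfolding susp_domain_def by auto
  then have "(y, real n) \<in> susp_class X (\<lambda>_. 1) (\<lambda>_. 0) (\<lambda>_. 0) y' (real m)"
    using susp_class_self assms(2) by metis
  then have "((y', real m), (y, real n)) \<in> susp_rel X (\<lambda>_. 1) (\<lambda>_. 0) (\<lambda>_. 0)"
    by (rule susp_class_mem)
  then have "std_inv (y', real m) = std_inv (y, real n)" by (rule std_inv_rel)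
  then show ?thesis unfolding std_inv_def by simp
qed

lemma Nats_nat_floor: "(r::real) \<in> \<nat> \<Longrightarrow> real (nat \<lfloor>r\<rfloor>) = r"
  by (auto elim!: Nats_cases)

lemma continuous_on_nat_floor:
  fixes f :: "'a::topological_space \<Rightarrow> real"
  assumes "continuous_on S f" "\<forall>x\<in>S. f x \<in> \<nat>"
  shows "continuous_on S (\<lambda>x. nat \<lfloor>f x\<rfloor>)"
proof -
  have "continuous_on (f ` S) (\<lambda>r::real. nat \<lfloor>r\<rfloor>)"
  proof (rule continuous_on_discrete)
    show "discrete (f ` S)"
    proof (rule discreteI)
      fix r assume "r \<in> f ` S"
      then have rN: "r \<in> \<nat>" using assms(2) by auto
      show "r isolated_in f ` S"
        unfolding isolated_in_dist_Ex_iff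
      proof (intro conjI exI[of _ "1/2"] ballI impI)
        show "r \<in> f ` S" by fact
        fix z assume "z \<in> f ` S" and d: "dist r z < 1/2"
        then have "z \<in> \<nat>" using assms(2) by auto
        with rN obtain a b :: nat where ab: "z = real a" "r = real b" by (auto elim!: Nats_cases)
        show "z = r"
        proof (rule ccontr)
          assume "z \<noteq> r"
          then have "a \<noteq> b" using ab by auto
          then have "real a + 1 \<le> real b \<or> real b + 1 \<le> real a"
            by (metis Suc_leI linorder_neqE_nat of_nat_Suc of_nat_le_iff add.commute)
          then show False using d ab by (auto simp: dist_real_def)
        qed
      qed simp
    qed
  qed
  then show ?thesis using continuous_on_compose[OF assms(1)] by (simp add: o_def)
qed

lemma shift_continuous: "continuous_on S shift"
  unfolding shift_def by (intro continuous_on_coordinatewise_then_product continuous_on_product_coordinates[THEN continuous_on_subset]) auto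

lemma shift_space_shift: "x \<in> shift_space N A \<Longrightarrow> shift x \<in> shift_space N A"
  unfolding shift_space_def shift_def by auto

lemma fe_half:
  assumes trip: "susp_triplet XA l k b"
    and hXA: "\<forall>x\<in>XA. h x \<in> XB"
    and shXA: "\<forall>x\<in>XA. shift x \<in> XA"
    and flow: "\<forall>t\<ge>0. \<forall>p\<in>topspace (suspension XA l k b).
          \<Phi> (susp_flow XA l k b t p) = std_flow XB t (\<Phi> p)"
    and base: "\<forall>x\<in>XA. \<Phi> (susp_class XA l k b x (b x)) = std_base XB (h x)"
  shows "\<exists>(k1 :: (nat \<Rightarrow> nat) \<Rightarrow> nat) l1. continuous_on XA k1 \<and> continuous_on XA l1 \<and>
     (\<forall>x\<in>XA. (shift ^^ k1 x) (h (shift x)) = (shift ^^ l1 x) (h x))"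
proof -
  from trip have cl: "continuous_on XA l" and ck: "continuous_on XA k" and cb: "continuous_on XA b"
    and Nl: "\<forall>x\<in>XA. l x - b x \<in> \<nat>" and Nk: "\<forall>x\<in>XA. k x - b (shift x) \<in> \<nat>"
    unfolding susp_triplet_def by blast+
  define l1 where "l1 x = nat \<lfloor>l x - b x\<rfloor>" for x
  define k1 where "k1 x = nat \<lfloor>k x - b (shift x)\<rfloor>" for x
  have cbs: "continuous_on XA (\<lambda>x. b (shift x))"
    using continuous_on_compose2[OF cb shift_continuous, of XA] shXA by auto
  have "continuous_on XA l1" unfolding l1_def
    by (rule continuous_on_nat_floor) (use Nl cl cb in \<open>auto intro: continuous_on_diff\<close>)
  moreover have "continuous_on XA k1" unfolding k1_def
    by (rule continuous_on_nat_floor) (use Nk ck cbs in \<open>auto intro: continuous_on_diff\<close>)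
  moreover have "(shift ^^ k1 x) (h (shift x)) = (shift ^^ l1 x) (h x)" if x: "x \<in> XA" for x
  proof -
    let ?cl = "susp_class XA l k b"
    let ?sc = "susp_class XB (\<lambda>_. 1) (\<lambda>_. 0) (\<lambda>_. 0)"
    have rl: "real (l1 x) = l x - b x" unfolding l1_def using Nl x Nats_nat_floor by auto
    have rk: "real (k1 x) = k x - b (shift x)" unfolding k1_def using Nk x Nats_nat_floor by auto
    have sx: "shift x \<in> XA" using shXA x by auto
    have D1: "(x, b x) \<in> susp_domain XA b" using x unfolding susp_domain_def by auto
    have D2: "(shift x, b (shift x)) \<in> susp_domain XA b" using sx unfolding susp_domain_def by auto
    have DB1: "(h x, 0) \<in> susp_domain XB (\<lambda>_. 0)" using hXA x unfolding susp_domain_def by auto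
    have DB2: "(h (shift x), 0) \<in> susp_domain XB (\<lambda>_. 0)" using hXA sx unfolding susp_domain_def by auto
    have e1: "susp_flow XA l k b (real (l1 x)) (?cl x (b x)) = ?cl x (l x)"
      using susp_flow_class[OF D1, of "real (l1 x)" l k] rl by simp
    have e2: "susp_flow XA l k b (real (k1 x)) (?cl (shift x) (b (shift x))) = ?cl (shift x) (k x)"
      using susp_flow_class[OF D2, of "real (k1 x)" l k] rk by simp
    have lb: "l x \<ge> b x" using rl of_nat_0_le_iff[of "l1 x"] by linarith
    have kb: "k x \<ge> b (shift x)" using rk of_nat_0_le_iff[of "k1 x"] by linarith
    have "l x - (l x - k x) = k x" by simp
    then have g: "((x, l x), (shift x, k x)) \<in> susp_gen XA l k b"
      unfolding susp_gen_def susp_domain_def using x lb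
      by (smt (verit, best) case_prodI mem_Collect_eq)
    have DL: "(x, l x) \<in> susp_domain XA b" using x lb unfolding susp_domain_def by auto
    have DK: "(shift x, k x) \<in> susp_domain XA b" using sx kb unfolding susp_domain_def by auto
    have "((x, l x), (shift x, k x)) \<in> (susp_gen XA l k b \<union> (susp_gen XA l k b)\<inverse>)\<^sup>*"
      using g by blast
    then have "((x, l x), (shift x, k x)) \<in> susp_rel XA l k b"
      unfolding susp_rel_def using DL DK by blast
    then have e3: "?cl x (l x) = ?cl (shift x) (k x)" by (rule susp_class_eq)
    have fl1: "\<Phi> (susp_flow XA l k b (real (l1 x)) (?cl x (b x))) = std_flow XB (real (l1 x)) (\<Phi> (?cl x (b x)))"
      using flow susp_class_in_top[OF D1] of_nat_0_le_iff by blast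
    have "\<Phi> (?cl x (l x)) = std_flow XB (real (l1 x)) (?sc (h x) 0)"
      using fl1 unfolding e1 base[rule_format, OF x] .
    also have "\<dots> = ?sc (h x) (real (l1 x))"
      using susp_flow_class[OF DB1, of "real (l1 x)"] by simp
    finally have p1: "\<Phi> (?cl x (l x)) = ?sc (h x) (real (l1 x))" .
    have fl2: "\<Phi> (susp_flow XA l k b (real (k1 x)) (?cl (shift x) (b (shift x)))) = std_flow XB (real (k1 x)) (\<Phi> (?cl (shift x) (b (shift x))))"
      using flow susp_class_in_top[OF D2] of_nat_0_le_iff by blast
    have "\<Phi> (?cl (shift x) (k x)) = std_flow XB (real (k1 x)) (?sc (h (shift x)) 0)"
      using fl2 unfolding e2 base[rule_format, OF sx] .
    also have "\<dots> = ?sc (h (shift x)) (real (k1 x))"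
      using susp_flow_class[OF DB2, of "real (k1 x)"] by simp
    finally have p2: "\<Phi> (?cl (shift x) (k x)) = ?sc (h (shift x)) (real (k1 x))" .
    have "?sc (h x) (real (l1 x)) = ?sc (h (shift x)) (real (k1 x))"
      using p1 p2 e3 by simp
    then have "(shift ^^ l1 x) (h x) = (shift ^^ k1 x) (h (shift x))"
      by (rule std_class_inj[OF hXA[rule_format, OF x]])
    then show ?thesis by simp
  qed
  ultimately show ?thesis by blast
qed

lemma coe_intro:
  fixes kk1 ll1 :: "(nat\<Rightarrow>nat) \<Rightarrow> nat" and kk2 ll2 :: "(nat\<Rightarrow>nat) \<Rightarrow> nat"
  assumes hom: "homeomorphism (shift_space N A) (shift_space M B) h h'" and
  c1: "continuous_on (shift_space N A) kk1" "continuous_on (shift_space N A) ll1"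
    "\<forall>x\<in>(shift_space N A). (shift ^^ kk1 x) (h (shift x)) = (shift ^^ ll1 x) (h x)"
  and c2: "continuous_on (shift_space M B) kk2" "continuous_on (shift_space M B) ll2"
    "\<forall>y\<in>(shift_space M B). (shift ^^ kk2 y) (h' (shift y)) = (shift ^^ ll2 y) (h' y)"
  shows "cont_orbit_equiv N A M B"
  unfolding cont_orbit_equiv_def Let_def
  apply (rule exI[of _ h])
  apply (rule exI[of _ h'])
  apply (rule exI[of _ kk1])
  apply (rule exI[of _ ll1])
  apply (rule exI[of _ kk2])
  apply (rule exI[of _ ll2])
  using hom c1 c2 by simp

lemma fe_imp_coe:
  assumes "one_sided_flow_equiv N A M B"
  shows "cont_orbit_equiv N A M B"
proof -
  let ?XA = "shift_space N A" and ?XB = "shift_space M B"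
  from assms obtain l1 k1 b1 l2 k2 b2 h h' \<Phi>1 \<Phi>2 where
    t1: "susp_triplet ?XA l1 k1 b1" and t2: "susp_triplet ?XB l2 k2 b2" and
    hom: "homeomorphism ?XA ?XB h h'" and
    f1: "\<forall>t\<ge>0. \<forall>p\<in>topspace (suspension ?XA l1 k1 b1).
          \<Phi>1 (susp_flow ?XA l1 k1 b1 t p) = std_flow ?XB t (\<Phi>1 p)" and
    f2: "\<forall>t\<ge>0. \<forall>p\<in>topspace (suspension ?XB l2 k2 b2).
          \<Phi>2 (susp_flow ?XB l2 k2 b2 t p) = std_flow ?XA t (\<Phi>2 p)" and
    b1: "\<forall>x\<in>?XA. \<Phi>1 (susp_class ?XA l1 k1 b1 x (b1 x)) = std_base ?XB (h x)" and
    b2: "\<forall>y\<in>?XB. \<Phi>2 (susp_class ?XB l2 k2 b2 y (b2 y)) = std_base ?XA (h' y)"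
    unfolding one_sided_flow_equiv_def Let_def by (elim exE conjE) (rule that; assumption)
  have hA: "\<forall>x\<in>?XA. h x \<in> ?XB" and hB: "\<forall>y\<in>?XB. h' y \<in> ?XA"
    using hom unfolding homeomorphism_def by auto
  have sA: "\<forall>x\<in>?XA. shift x \<in> ?XA" and sB: "\<forall>x\<in>?XB. shift x \<in> ?XB"
    using shift_space_shift by blast+
  from fe_half[OF t1 hA sA f1 b1] obtain kk1 ll1 where c1: "continuous_on ?XA kk1" "continuous_on ?XA ll1"
    "\<forall>x\<in>?XA. (shift ^^ kk1 x) (h (shift x)) = (shift ^^ ll1 x) (h x)"
    by blast
  from fe_half[OF t2 hB sB f2 b2] obtain kk2 ll2 where c2: "continuous_on ?XB kk2" "continuous_on ?XB ll2"
    "\<forall>y\<in>?XB. (shift ^^ kk2 y) (h' (shift y)) = (shift ^^ ll2 y) (h' y)"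
    by blast
  show ?thesis by (rule coe_intro[OF hom c1 c2])
qed


definition agr :: "nat \<Rightarrow> (nat \<Rightarrow> nat) \<Rightarrow> (nat \<Rightarrow> nat) \<Rightarrow> bool" where
  "agr n x y \<longleftrightarrow> (\<forall>i<n. x i = y i)"

definition cat :: "nat \<Rightarrow> (nat \<Rightarrow> nat) \<Rightarrow> (nat \<Rightarrow> nat) \<Rightarrow> (nat \<Rightarrow> nat)" where
  "cat n f y = (\<lambda>i. if i < n then f i else y (i - n))"

lemma funpow_shift: "(shift ^^ n) x = (\<lambda>i. x (i + n))"
  by (induction n arbitrary: x) (auto simp: shift_def)

lemma funpow_shift_apply: "(shift ^^ n) x i = x (i + n)"
  by (simp add: funpow_shift)

lemma shift_cat: "(shift ^^ n) (cat n f y) = y"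
  by (simp add: funpow_shift cat_def)

lemma agr_cat: "agr n (cat n f y) f"
  by (simp add: agr_def cat_def)

lemma cat_shift_self: "cat n z ((shift ^^ n) z) = z"
  by (auto simp: cat_def funpow_shift)

lemma cat_agr_eq: "agr n f g \<Longrightarrow> cat n f y = cat n g y"
  by (auto simp: cat_def agr_def)

lemma agr_trans: "agr n x y \<Longrightarrow> agr n y z \<Longrightarrow> agr n x z"
  by (auto simp: agr_def)

lemma agr_sym: "agr n x y \<Longrightarrow> agr n y x"
  by (auto simp: agr_def)

lemma agr_mono: "agr n x y \<Longrightarrow> m \<le> n \<Longrightarrow> agr m x y"
  by (auto simp: agr_def)

lemma agr_refl[simp]: "agr n x x"
  by (auto simp: agr_def)

lemma agr_shift: "agr (n + R) x y \<Longrightarrow> i \<le> n \<Longrightarrow> agr R ((shift ^^ i) x) ((shift ^^ i) y)"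
  by (auto simp: agr_def funpow_shift)

lemma shift_space_funpow: "x \<in> shift_space N A \<Longrightarrow> (shift ^^ n) x \<in> shift_space N A"
  by (auto simp: shift_space_def funpow_shift)

lemma shift_space_D: "x \<in> shift_space N A \<Longrightarrow> x n \<in> {1..N}"
  and shift_space_D2: "x \<in> shift_space N A \<Longrightarrow> A (x n) (x (Suc n)) = 1"
  by (auto simp: shift_space_def)

lemma cat_in:
  assumes "\<forall>t\<le>n. f t \<in> {1..N}" "\<forall>t<n. A (f t) (f (Suc t)) = 1" "y \<in> shift_space N A" "y 0 = f n"
  shows "cat n f y \<in> shift_space N A"
  unfolding shift_space_def
proof (intro CollectI allI conjI)
  fix i
  show "cat n f y i \<in> {1..N}"
    using assms(1) shift_space_D[OF assms(3)] by (auto simp: cat_def)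
  show "A (cat n f y i) (cat n f y (Suc i)) = 1"
  proof (cases "Suc i < n")
    case True then show ?thesis using assms(2) by (auto simp: cat_def)
  next
    case False
    show ?thesis
    proof (cases "Suc i = n")
      case True then show ?thesis using assms(2,4) by (auto simp: cat_def)
    next
      case F2: False
      with False have "i \<ge> n" by auto
      then have "Suc i - n = Suc (i - n)" by auto
      then show ?thesis using \<open>i \<ge> n\<close> shift_space_D2[OF assms(3), of "i - n"] by (auto simp: cat_def)
    qed
  qed
qed

lemma cat_in_point:
  assumes "x \<in> shift_space N A" "y \<in> shift_space N A" "y 0 = x n"
  shows "cat n x y \<in> shift_space N A"
  by (rule cat_in) (use assms shift_space_D shift_space_D2 in auto)

lemma agr_open: "open {z. agr n z x}"
proof -
  have "open {f. \<forall>i\<in>{..<n}. f (id i) \<in> {x i}}"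
    by (rule product_topology_basis') (simp_all add: open_discrete)
  moreover have "{f. \<forall>i\<in>{..<n}. f (id i) \<in> {x i}} = {z. agr n z x}"
    by (auto simp: agr_def)
  ultimately show ?thesis by simp
qed

lemma open_agr_nbhd:
  assumes "open U" "(x :: nat \<Rightarrow> nat) \<in> U"
  shows "\<exists>n. {z. agr n z x} \<subseteq> U"
proof -
  from assms have "openin (product_topology (\<lambda>i. euclidean) UNIV) U"
    by (simp add: open_fun_def)
  from product_topology_open_contains_basis[OF this assms(2)] obtain Xs where
    Xs: "x \<in> (\<Pi>\<^sub>E i\<in>UNIV. Xs i)" "finite {i. Xs i \<noteq> topspace (euclidean :: nat topology)}"
      "(\<Pi>\<^sub>E i\<in>UNIV. Xs i) \<subseteq> U"
    by blast
  define F where "F = {i. Xs i \<noteq> UNIV}"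
  have fF: "finite F" using Xs(2) unfolding F_def by simp
  define n where "n = Suc (Max (insert 0 F))"
  have "{z. agr n z x} \<subseteq> (\<Pi>\<^sub>E i\<in>UNIV. Xs i)"
  proof
    fix z assume z: "z \<in> {z. agr n z x}"
    have "z i \<in> Xs i" for i
    proof (cases "i \<in> F")
      case True
      then have "i < n" unfolding n_def using fF by (simp add: le_imp_less_Suc)
      then have "z i = x i" using z by (auto simp: agr_def)
      then show ?thesis using Xs(1) by auto
    next
      case False then show ?thesis unfolding F_def by auto
    qed
    then show "z \<in> (\<Pi>\<^sub>E i\<in>UNIV. Xs i)" by auto
  qed
  with Xs(3) show ?thesis by blast
qed

lemma shift_space_closed: "closed (shift_space N A)"
proof -
  have "\<exists>T. open T \<and> y \<in> T \<and> T \<subseteq> - shift_space N A" if y: "y \<in> - shift_space N A" for y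
  proof -
    have "\<not> (\<forall>n. y n \<in> {1..N} \<and> A (y n) (y (Suc n)) = 1)"
      using y unfolding shift_space_def by simp
    then obtain n where n: "\<not> (y n \<in> {1..N} \<and> A (y n) (y (Suc n)) = 1)" by blast
    have "{z. agr (Suc (Suc n)) z y} \<subseteq> - shift_space N A"
    proof
      fix z assume "z \<in> {z. agr (Suc (Suc n)) z y}"
      then have e: "z n = y n" "z (Suc n) = y (Suc n)" by (auto simp: agr_def)
      show "z \<in> - shift_space N A"
      proof
        assume "z \<in> shift_space N A"
        then have "z n \<in> {1..N} \<and> A (z n) (z (Suc n)) = 1" unfolding shift_space_def by blast
        with n e show False by simp
      qed
    qed
    then show ?thesis using agr_open[of "Suc (Suc n)" y] by auto
  qed
  then have "open (- shift_space N A)" by (subst open_subopen) blast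
  then show ?thesis by (simp add: closed_def)
qed

lemma shift_space_compact: "compact (shift_space N A)"
proof -
  have "compactin (product_topology (\<lambda>i. euclidean) UNIV) (PiE UNIV (\<lambda>_::nat. {1..N}))"
    by (subst compactin_PiE) (simp add: finite_imp_compact)
  then have c: "compact (PiE UNIV (\<lambda>_::nat. {1..N}))"
    by (simp add: euclidean_product_topology)
  have "shift_space N A = PiE UNIV (\<lambda>_::nat. {1..N}) \<inter> shift_space N A"
    unfolding shift_space_def by auto
  then show ?thesis using compact_Int_closed[OF c shift_space_closed, of N A] by simp
qed

lemma locconst:
  fixes f :: "(nat \<Rightarrow> nat) \<Rightarrow> 'b::discrete_topology"
  assumes "continuous_on (shift_space N A) f"
  shows "\<exists>n. \<forall>x\<in>shift_space N A. \<forall>z\<in>shift_space N A. agr n z x \<longrightarrow> f z = f x"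
proof -
  let ?X = "shift_space N A"
  have "\<exists>n. {z. agr n z x} \<inter> ?X \<subseteq> f -` {f x}" if x: "x \<in> ?X" for x
  proof -
    obtain U where U: "open U" "U \<inter> ?X = f -` {f x} \<inter> ?X"
      using assms[unfolded continuous_on_open_invariant, rule_format, OF open_discrete[of "{f x}"]] by blast
    then have "x \<in> U" using x by auto
    from open_agr_nbhd[OF U(1) this] obtain n where "{z. agr n z x} \<subseteq> U" by blast
    then show ?thesis using U(2) by blast
  qed
  then have "\<forall>x\<in>?X. \<exists>n. {z. agr n z x} \<inter> ?X \<subseteq> f -` {f x}" by blast
  then obtain nn where nn: "\<forall>x\<in>?X. {z. agr (nn x) z x} \<inter> ?X \<subseteq> f -` {f x}"
    by (rule bchoice[elim_format]) blast
  have "?X \<subseteq> (\<Union>x\<in>?X. {z. agr (nn x) z x})" by auto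
  from compactE_image[OF shift_space_compact agr_open this] obtain C where
    C: "C \<subseteq> ?X" "finite C" "?X \<subseteq> (\<Union>x\<in>C. {z. agr (nn x) z x})" by blast
  define n where "n = Max (insert 0 (nn ` C))"
  have "f z = f x" if "x \<in> ?X" "z \<in> ?X" "agr n z x" for x z
  proof -
    from C(3) that(1) obtain c where c: "c \<in> C" "agr (nn c) x c" by auto
    have "nn c \<le> n" unfolding n_def using C(2) c(1) by simp
    then have "agr (nn c) z x" using that(3) agr_mono by blast
    then have "agr (nn c) z c" using c(2) agr_trans by blast
    moreover have "{z. agr (nn c) z c} \<inter> ?X \<subseteq> f -` {f c}" using nn c C(1) by blast
    ultimately have "f z = f c" "f x = f c" using c(2) that(1,2) by auto
    then show ?thesis by simp
  qed
  then show ?thesis by blast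
qed

lemma unif_cont:
  assumes "continuous_on (shift_space N A) h"
  shows "\<exists>n. \<forall>x\<in>shift_space N A. \<forall>z\<in>shift_space N A. agr n z x \<longrightarrow> agr m (h z) (h x)"
proof (induction m)
  case 0 then show ?case unfolding agr_def by simp
next
  case (Suc m)
  then obtain n1 where n1: "\<forall>x\<in>shift_space N A. \<forall>z\<in>shift_space N A. agr n1 z x \<longrightarrow> agr m (h z) (h x)"
    by blast
  have "continuous_on (shift_space N A) (\<lambda>x. h x m)"
    using continuous_on_product_then_coordinatewise[OF assms] .
  from locconst[OF this] obtain n2 where
    n2: "\<forall>x\<in>shift_space N A. \<forall>z\<in>shift_space N A. agr n2 z x \<longrightarrow> h z m = h x m" by blast
  have "agr (Suc m) (h z) (h x)" if "x \<in> shift_space N A" "z \<in> shift_space N A" "agr (max n1 n2) z x" for x z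
  proof -
    have a1: "agr n1 z x" using agr_mono[OF that(3) max.cobounded1] .
    have a2: "agr n2 z x" using agr_mono[OF that(3) max.cobounded2] .
    have "agr m (h z) (h x)" using n1 that(1,2) a1 by blast
    moreover have "h z m = h x m" using n2 that(1,2) a2 by blast
    ultimately show ?thesis unfolding agr_def using less_Suc_eq by auto
  qed
  then show ?case by blast
qed


lemma mat_pow_path:
  assumes zo: "zero_one_matrix N A" and "0 < mat_pow N A n i j" "j \<in> {1..N}" "i \<in> {1..N}"
  shows "\<exists>f. f 0 = i \<and> f n = j \<and> (\<forall>t\<le>n. f t \<in> {1..N}) \<and> (\<forall>t<n. A (f t) (f (Suc t)) = 1)"
  using assms(2,3)
proof (induction n arbitrary: j)
  case 0
  then have "i = j" by (simp split: if_splits)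
  then show ?case using assms(4) by (intro exI[of _ "\<lambda>_. i"]) auto
next
  case (Suc n)
  have "(\<Sum>m\<in>{1..N}. mat_pow N A n i m * A m j) = mat_pow N A (Suc n) i j"
    by (simp only: mat_pow.simps)
  then have "(\<Sum>m\<in>{1..N}. mat_pow N A n i m * A m j) \<noteq> 0" using Suc.prems(1) by linarith
  then obtain m where m: "m \<in> {1..N}" "mat_pow N A n i m * A m j \<noteq> 0"
    by (meson sum.neutral)
  then have p: "0 < mat_pow N A n i m" and a: "A m j \<noteq> 0" by auto
  have "A m j \<in> {0, 1}" using zo m(1) Suc.prems(2) unfolding zero_one_matrix_def by blast
  with a have a1: "A m j = 1" by auto
  from Suc.IH[OF p m(1)] obtain f where f: "f 0 = i" "f n = m" "\<forall>t\<le>n. f t \<in> {1..N}"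
    "\<forall>t<n. A (f t) (f (Suc t)) = 1" by blast
  define g where "g = f(Suc n := j)"
  have "g 0 = i" "g (Suc n) = j" using f(1) by (auto simp: g_def)
  moreover have "\<forall>t\<le>Suc n. g t \<in> {1..N}"
  proof (intro allI impI)
    fix t assume "t \<le> Suc n"
    then show "g t \<in> {1..N}" using f(3) Suc.prems(2) by (cases "t = Suc n") (auto simp: g_def)
  qed
  moreover have "\<forall>t<Suc n. A (g t) (g (Suc t)) = 1"
  proof (intro allI impI)
    fix t assume t: "t < Suc n"
    show "A (g t) (g (Suc t)) = 1"
    proof (cases "t = n")
      case True then show ?thesis using f(2) a1 by (simp add: g_def)
    next
      case False then have "t < n" using t by simp
      then show ?thesis using f(4) by (simp add: g_def)
    qed
  qed
  ultimately show ?case by blast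
qed

lemma cat_in2:
  assumes "x \<in> shift_space N A" "y \<in> shift_space N A" "A (x (n - 1)) (y 0) = 1" "n > 0"
  shows "cat n x y \<in> shift_space N A"
proof -
  define f where "f = x(n := y 0)"
  have "cat n f y \<in> shift_space N A"
  proof (rule cat_in)
    show "\<forall>t\<le>n. f t \<in> {1..N}"
      using shift_space_D[OF assms(1)] shift_space_D[OF assms(2)] by (simp add: f_def)
    show "\<forall>t<n. A (f t) (f (Suc t)) = 1"
    proof (intro allI impI)
      fix t assume t: "t < n"
      show "A (f t) (f (Suc t)) = 1"
      proof (cases "Suc t = n")
        case True
        then have "t = n - 1" by simp
        then show ?thesis using True assms(3) t by (simp add: f_def)
      next
        case False
        then show ?thesis using t shift_space_D2[OF assms(1), of t] by (simp add: f_def)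
      qed
    qed
  qed (use assms in \<open>auto simp: f_def\<close>)
  moreover have "cat n f y = cat n x y"
    by (rule cat_agr_eq) (simp add: agr_def f_def)
  ultimately show ?thesis by simp
qed

locale sft =
  fixes N :: nat and A :: "nat \<Rightarrow> nat \<Rightarrow> nat"
  assumes adm: "admissible_matrix N A"
begin

abbreviation "X \<equiv> shift_space N A"

lemma zo: "zero_one_matrix N A" and irr: "irreducible_matrix N A" and notperm: "\<not> permutation_matrix N A"
  and Ngt: "N > 1"
  using adm unfolding admissible_matrix_def by auto

lemma path:
  assumes "i \<in> {1..N}" "j \<in> {1..N}"
  shows "\<exists>q f. q > 0 \<and> f 0 = i \<and> f q = j \<and> (\<forall>t\<le>q. f t \<in> {1..N}) \<and> (\<forall>t<q. A (f t) (f (Suc t)) = 1)"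
proof -
  obtain q where q: "q > 0" "mat_pow N A q i j > 0"
    using irr assms unfolding irreducible_matrix_def by blast
  from mat_pow_path[OF zo q(2) assms(2,1)] q(1) show ?thesis by blast
qed

lemma succ_ex: "i \<in> {1..N} \<Longrightarrow> \<exists>j\<in>{1..N}. A i j = 1"
proof -
  assume i: "i \<in> {1..N}"
  from path[OF i i] obtain q f where qf: "q > 0" "f 0 = i" "\<forall>t\<le>q. f t \<in> {1..N}"
    "\<forall>t<q. A (f t) (f (Suc t)) = 1" by blast
  then have "f 1 \<in> {1..N}" "A (f 0) (f (Suc 0)) = 1" by auto
  then show ?thesis using qf(2) by auto
qed

lemma pred_ex: "j \<in> {1..N} \<Longrightarrow> \<exists>i\<in>{1..N}. A i j = 1"
proof -
  assume j: "j \<in> {1..N}"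
  from path[OF j j] obtain q f where qf: "q > 0" "f q = j" "\<forall>t\<le>q. f t \<in> {1..N}"
    "\<forall>t<q. A (f t) (f (Suc t)) = 1" by blast
  have q1: "Suc (q - 1) = q" using qf(1) by simp
  have "q - 1 < q" using qf(1) by simp
  then have "A (f (q - 1)) (f (Suc (q - 1))) = 1" using qf(4) by blast
  then have "A (f (q - 1)) j = 1" unfolding q1 qf(2) .
  moreover have "f (q - 1) \<in> {1..N}" using qf(3) by simp
  ultimately show ?thesis by blast
qed

definition sc :: "nat \<Rightarrow> nat" where "sc i = (SOME j. j \<in> {1..N} \<and> A i j = 1)"

lemma sc: "i \<in> {1..N} \<Longrightarrow> sc i \<in> {1..N} \<and> A i (sc i) = 1"
proof -
  assume i: "i \<in> {1..N}"
  from succ_ex[OF i] have "\<exists>j. j \<in> {1..N} \<and> A i j = 1" by blast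
  then show ?thesis unfolding sc_def by (rule someI_ex)
qed

definition pt :: "nat \<Rightarrow> nat \<Rightarrow> nat" where "pt s = (\<lambda>n. (sc ^^ n) s)"

lemma pt_range: "s \<in> {1..N} \<Longrightarrow> (sc ^^ n) s \<in> {1..N}"
proof (induction n)
  case 0 then show ?case by simp
next
  case (Suc n) then show ?case using sc[of "(sc ^^ n) s"] by simp
qed

lemma pt_in: "s \<in> {1..N} \<Longrightarrow> pt s \<in> X"
proof -
  assume s: "s \<in> {1..N}"
  have "(sc ^^ n) s \<in> {1..N} \<and> A ((sc ^^ n) s) ((sc ^^ Suc n) s) = 1" for n
    using pt_range[OF s, of n] sc[OF pt_range[OF s, of n]] by simp
  then show ?thesis unfolding shift_space_def pt_def by blast
qed

lemma pt_0[simp]: "pt s 0 = s"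
  by (simp add: pt_def)

lemma pt_shift: "(shift ^^ t) (pt s) = pt (pt s t)"
proof
  fix i
  have "(sc ^^ (i + t)) s = (sc ^^ i) ((sc ^^ t) s)" by (simp only: funpow_add o_apply)
  then show "(shift ^^ t) (pt s) i = pt (pt s t) i" unfolding funpow_shift_apply pt_def by simp
qed

definition Tset where "Tset = pt ` {1..N}"

lemma Tset_eq: "y \<in> Tset \<Longrightarrow> y = pt (y 0)"
  unfolding Tset_def by auto

lemma Tset_sub: "Tset \<subseteq> X"
  unfolding Tset_def using pt_in by auto

lemma pt_Tset: "s \<in> {1..N} \<Longrightarrow> (shift ^^ t) (pt s) \<in> Tset"
proof -
  assume s: "s \<in> {1..N}"
  have "pt s t \<in> {1..N}" using pt_in[OF s] shift_space_D by blast
  then show ?thesis unfolding pt_shift Tset_def by blast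
qed

lemma SS_det:
  assumes "(shift ^^ t) z \<in> Tset"
  shows "z = cat t z (pt (z t))"
proof -
  have "(shift ^^ t) z = pt (z t)"
    using Tset_eq[OF assms] by (simp add: funpow_shift_apply)
  then show ?thesis using cat_shift_self[of t z] by simp
qed

lemma SS_inj:
  assumes "(shift ^^ t) z \<in> Tset" "(shift ^^ t) z' \<in> Tset" "agr (Suc t) z z'"
  shows "z = z'"
proof -
  have "agr t z z'" using assms(3) agr_mono by fastforce
  moreover have "z t = z' t" using assms(3) by (simp add: agr_def)
  ultimately have "cat t z (pt (z t)) = cat t z' (pt (z' t))" using cat_agr_eq[of t z z'] by simp
  then show ?thesis using SS_det[OF assms(1)] SS_det[OF assms(2)] by simp
qed

lemma finite_SS: "finite {z\<in>X. (shift ^^ t) z \<in> Tset}"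
proof -
  let ?S = "{z\<in>X. (shift ^^ t) z \<in> Tset}"
  have "inj_on (\<lambda>z. restrict z {..t}) ?S"
  proof (rule inj_onI)
    fix z z' assume "z \<in> ?S" "z' \<in> ?S" "restrict z {..t} = restrict z' {..t}"
    moreover have "agr (Suc t) z z'"
      unfolding agr_def
    proof (intro allI impI)
      fix i assume "i < Suc t"
      then have "restrict z {..t} i = restrict z' {..t} i" using calculation(3) by simp
      then show "z i = z' i" using \<open>i < Suc t\<close> by simp
    qed
    ultimately show "z = z'" using SS_inj by blast
  qed
  moreover have "(\<lambda>z. restrict z {..t}) ` ?S \<subseteq> (\<Pi>\<^sub>E i\<in>{..t}. {1..N})"
  proof
    fix w assume "w \<in> (\<lambda>z. restrict z {..t}) ` ?S"
    then obtain z where "z \<in> X" "w = restrict z {..t}" by blast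
    then show "w \<in> (\<Pi>\<^sub>E i\<in>{..t}. {1..N})" using shift_space_D[of z N A] by auto
  qed
  moreover have "finite (\<Pi>\<^sub>E i\<in>{..t}. {1..N})" by (rule finite_PiE) auto
  ultimately have "finite ((\<lambda>z. restrict z {..t}) ` ?S)" using finite_subset by blast
  then show ?thesis using finite_imageD \<open>inj_on _ ?S\<close> by blast
qed

definition Wset where "Wset v t = {z\<in>X. z 0 = v \<and> (shift ^^ t) z \<in> Tset}"
definition W where "W v t = card (Wset v t)"

lemma finite_Wset: "finite (Wset v t)"
  by (rule finite_subset[OF _ finite_SS[of t]]) (auto simp: Wset_def)

lemma W_pos: "v \<in> {1..N} \<Longrightarrow> W v t \<ge> 1"
proof -
  assume v: "v \<in> {1..N}"
  have "pt v \<in> Wset v t" unfolding Wset_def using pt_in[OF v] pt_Tset[OF v] by simp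
  then have "card (Wset v t) > 0" using finite_Wset card_gt_0_iff by blast
  then show ?thesis unfolding W_def by simp
qed

lemma W_Suc: "W v t \<le> W v (Suc t)"
proof -
  define g where "g z = cat (Suc t) z (pt (sc (z t)))" for z
  have "inj_on g (Wset v t)"
  proof (rule inj_onI)
    fix z z' assume z: "z \<in> Wset v t" and z': "z' \<in> Wset v t" and e: "g z = g z'"
    have a1: "agr (Suc t) (g z) z" unfolding g_def by (rule agr_cat)
    have a2: "agr (Suc t) (g z) z'" unfolding e unfolding g_def by (rule agr_cat)
    have "agr (Suc t) z z'" by (rule agr_trans[OF agr_sym[OF a1] a2])
    then show "z = z'" using SS_inj z z' unfolding Wset_def by blast
  qed
  moreover have "g ` Wset v t \<subseteq> Wset v (Suc t)"
  proof
    fix w assume "w \<in> g ` Wset v t"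
    then obtain z where z: "z \<in> Wset v t" "w = g z" by blast
    have zX: "z \<in> X" and z0: "z 0 = v" using z(1) unfolding Wset_def by auto
    have zt: "z t \<in> {1..N}" using shift_space_D[OF zX] .
    have scz: "sc (z t) \<in> {1..N}" "A (z t) (sc (z t)) = 1" using sc[OF zt] by auto
    have "g z \<in> X" unfolding g_def
      by (rule cat_in2[OF zX pt_in[OF scz(1)]]) (use scz in simp_all)
    moreover have "g z 0 = v" using z0 by (simp add: g_def cat_def)
    moreover have "(shift ^^ Suc t) (g z) \<in> Tset"
      unfolding g_def shift_cat using pt_Tset[OF scz(1), of 0] by simp
    ultimately show "w \<in> Wset v (Suc t)" using z(2) unfolding Wset_def by simp
  qed
  ultimately show ?thesis unfolding W_def using card_inj_on_le[OF _ _ finite_Wset] by blast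
qed

lemma W_mono: "t \<le> t' \<Longrightarrow> W v t \<le> W v t'"
proof (induction t' rule: dec_induct)
  case base then show ?case by simp
next
  case (step n) then show ?case using W_Suc[of v n] by simp
qed

lemma W_path:
  assumes f: "f 0 = b" "f q = v" "\<forall>t\<le>q. f t \<in> {1..N}" "\<forall>t<q. A (f t) (f (Suc t)) = 1"
  shows "W v s \<le> W b (q + s)"
proof -
  define g where "g u = cat q f u" for u
  have "inj_on g (Wset v s)"
  proof (rule inj_onI)
    fix u u' assume "g u = g u'"
    then have "(shift ^^ q) (g u) = (shift ^^ q) (g u')" by simp
    then show "u = u'" unfolding g_def shift_cat .
  qed
  moreover have "g ` Wset v s \<subseteq> Wset b (q + s)"
  proof
    fix w assume "w \<in> g ` Wset v s"
    then obtain u where u: "u \<in> Wset v s" "w = g u" by blast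
    have uX: "u \<in> X" and u0: "u 0 = v" and ut: "(shift ^^ s) u \<in> Tset"
      using u(1) unfolding Wset_def by auto
    have "g u \<in> X" unfolding g_def by (rule cat_in) (use f uX u0 in auto)
    moreover have "g u 0 = b" using f(1,2) u0 by (cases "q = 0") (auto simp: g_def cat_def)
    moreover have "(shift ^^ (q + s)) (g u) \<in> Tset"
      using ut unfolding g_def by (simp add: add.commute[of q s] funpow_add shift_cat)
    ultimately show "w \<in> Wset b (q + s)" using u(2) unfolding Wset_def by simp
  qed
  ultimately show ?thesis unfolding W_def using card_inj_on_le[OF _ _ finite_Wset] by blast
qed

lemma W_double:
  assumes U: "\<forall>c\<in>{1..N}. U1 c \<in> X \<and> U2 c \<in> X \<and> U1 c 0 = c \<and> U2 c 0 = c \<and> U1 c \<noteq> U2 c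
     \<and> (shift ^^ e) (U1 c) \<in> Tset \<and> (shift ^^ e) (U2 c) \<in> Tset"
  shows "2 * W v s \<le> W v (s + e)"
proof -
  define g1 where "g1 z = cat s z (U1 (z s))" for z
  define g2 where "g2 z = cat s z (U2 (z s))" for z
  let ?S = "Wset v s"
  have inj: "inj_on g ?S" if gdef: "\<forall>z. g z = cat s z (U (z s))"
    and UU: "\<forall>c\<in>{1..N}. U c 0 = c" for g U
  proof (rule inj_onI)
    fix z z' assume z: "z \<in> ?S" and z': "z' \<in> ?S" and e: "g z = g z'"
    have zX: "z \<in> X" "z' \<in> X" using z z' unfolding Wset_def by auto
    have a1: "agr s (g z) z" unfolding gdef[rule_format] by (rule agr_cat)
    have a2: "agr s (g z) z'" unfolding e unfolding gdef[rule_format] by (rule agr_cat)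
    have "agr s z z'" by (rule agr_trans[OF agr_sym[OF a1] a2])
    moreover have "(shift ^^ s) (g z) = (shift ^^ s) (g z')" using e by simp
    then have "U (z s) = U (z' s)" unfolding gdef[rule_format] shift_cat .
    then have "U (z s) 0 = U (z' s) 0" by simp
    then have "z s = z' s" using UU shift_space_D[OF zX(1), of s] shift_space_D[OF zX(2), of s] by simp
    ultimately have "agr (Suc s) z z'" unfolding agr_def using less_Suc_eq by auto
    then show "z = z'" using SS_inj z z' unfolding Wset_def by blast
  qed
  have img: "g ` ?S \<subseteq> Wset v (s + e)" if gdef: "\<forall>z. g z = cat s z (U (z s))"
    and UU: "\<forall>c\<in>{1..N}. U c \<in> X \<and> U c 0 = c \<and> (shift ^^ e) (U c) \<in> Tset" for g U
  proof
    fix w assume "w \<in> g ` ?S"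
    then obtain z where z: "z \<in> ?S" "w = g z" by blast
    have zX: "z \<in> X" and z0: "z 0 = v" using z(1) unfolding Wset_def by auto
    have zs: "z s \<in> {1..N}" using shift_space_D[OF zX] .
    have "g z \<in> X" unfolding gdef[rule_format]
      by (rule cat_in_point[OF zX]) (use UU zs in auto)
    moreover have "g z 0 = v" using z0 UU zs unfolding gdef[rule_format] by (cases "s = 0") (auto simp: cat_def)
    moreover have "(shift ^^ (s + e)) (g z) \<in> Tset"
      unfolding gdef[rule_format] using UU zs
      by (simp add: add.commute[of s e] funpow_add shift_cat)
    ultimately show "w \<in> Wset v (s + e)" using z(2) unfolding Wset_def by simp
  qed
  have i1: "inj_on g1 ?S" by (rule inj) (use U g1_def in auto)
  have i2: "inj_on g2 ?S" by (rule inj) (use U g2_def in auto)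
  have m1: "g1 ` ?S \<subseteq> Wset v (s + e)" by (rule img) (use U g1_def in auto)
  have m2: "g2 ` ?S \<subseteq> Wset v (s + e)" by (rule img) (use U g2_def in auto)
  have disj: "g1 ` ?S \<inter> g2 ` ?S = {}"
  proof (rule ccontr)
    assume "g1 ` ?S \<inter> g2 ` ?S \<noteq> {}"
    then obtain z z' where z: "z \<in> ?S" "z' \<in> ?S" "g1 z = g2 z'" by blast
    have zX: "z \<in> X" "z' \<in> X" using z unfolding Wset_def by auto
    have "(shift ^^ s) (g1 z) = (shift ^^ s) (g2 z')" using z(3) by simp
    then have e1: "U1 (z s) = U2 (z' s)" unfolding g1_def g2_def shift_cat .
    have zs: "z s \<in> {1..N}" "z' s \<in> {1..N}" using shift_space_D zX by auto
    have u1: "U1 (z s) 0 = z s" and u2: "U2 (z' s) 0 = z' s" and ne: "U1 (z s) \<noteq> U2 (z s)"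
      using U zs by auto
    have "z s = z' s" using e1 u1 u2 by simp
    then show False using e1 ne by simp
  qed
  have "card (g1 ` ?S \<union> g2 ` ?S) = card (g1 ` ?S) + card (g2 ` ?S)"
    by (rule card_Un_disjoint) (use finite_Wset disj in auto)
  also have "\<dots> = 2 * W v s" unfolding W_def using card_image[OF i1] card_image[OF i2] by simp
  finally have "2 * W v s = card (g1 ` ?S \<union> g2 ` ?S)" by simp
  also have "\<dots> \<le> W v (s + e)" unfolding W_def
    by (rule card_mono[OF finite_Wset]) (use m1 m2 in auto)
  finally show ?thesis .
qed

end


lemma card_filter_sum: "finite I \<Longrightarrow> card {j\<in>I. P j} = (\<Sum>j\<in>I. if P j then 1 else 0 :: nat)"
proof -
  assume f: "finite I"
  have "(\<Sum>j\<in>I. if P j then 1 else 0 :: nat) = (\<Sum>j\<in>{j\<in>I. P j}. 1)"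
    using f by (simp add: sum.If_cases Int_def)
  then show ?thesis by simp
qed

context sft
begin

lemma branch: "\<exists>g\<in>{1..N}. \<exists>g1\<in>{1..N}. \<exists>g2\<in>{1..N}. g1 \<noteq> g2 \<and> A g g1 = 1 \<and> A g g2 = 1"
proof (rule ccontr)
  assume nb: "\<not> ?thesis"
  let ?I = "{1..N}"
  define rc where "rc i = card {j\<in>?I. A i j = 1}" for i
  define cc where "cc j = card {i\<in>?I. A i j = 1}" for j
  have nb': "g1 = g2" if "g \<in> ?I" "g1 \<in> ?I" "g2 \<in> ?I" "A g g1 = 1" "A g g2 = 1" for g g1 g2
  proof (rule ccontr)
    assume "g1 \<noteq> g2"
    then have "\<exists>g\<in>{1..N}. \<exists>g1\<in>{1..N}. \<exists>g2\<in>{1..N}. g1 \<noteq> g2 \<and> A g g1 = 1 \<and> A g g2 = 1"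
      using that by blast
    then show False by (rule notE[OF nb])
  qed
  have rc1: "rc i = 1" if i: "i \<in> ?I" for i
  proof -
    have ne: "{j\<in>?I. A i j = 1} \<noteq> {}" using succ_ex[OF i] by blast
    have all: "\<forall>j\<in>{j\<in>?I. A i j = 1}. \<forall>j'\<in>{j\<in>?I. A i j = 1}. j = j'"
    proof (intro ballI)
      fix j j' assume "j \<in> {j\<in>?I. A i j = 1}" "j' \<in> {j\<in>?I. A i j = 1}"
      then have "j \<in> ?I" "j' \<in> ?I" "A i j = 1" "A i j' = 1" by auto
      then show "j = j'" using nb'[OF i] by blast
    qed
    have fin: "finite {j\<in>?I. A i j = 1}" by simp
    have le: "card {j\<in>?I. A i j = 1} \<le> 1"
    proof -
      have "card {j\<in>?I. A i j = 1} \<le> Suc 0" using card_le_Suc0_iff_eq[OF fin] all by blast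
      then show ?thesis by simp
    qed
    have "card {j\<in>?I. A i j = 1} > 0" using ne by (simp add: card_gt_0_iff)
    with le show ?thesis unfolding rc_def by simp
  qed
  have cc1: "cc j \<ge> 1" if j: "j \<in> ?I" for j
  proof -
    have ne: "{i\<in>?I. A i j = 1} \<noteq> {}" using pred_ex[OF j] by blast
    then have "card {i\<in>?I. A i j = 1} > 0" by (simp add: card_gt_0_iff)
    then show ?thesis unfolding cc_def by simp
  qed
  have "(\<Sum>i\<in>?I. rc i) = (\<Sum>i\<in>?I. \<Sum>j\<in>?I. if A i j = 1 then 1 else 0)"
    unfolding rc_def by (rule sum.cong[OF refl card_filter_sum[OF finite_atLeastAtMost]])
  also have "\<dots> = (\<Sum>j\<in>?I. \<Sum>i\<in>?I. if A i j = 1 then 1 else 0)" by (rule sum.swap)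
  also have "\<dots> = (\<Sum>j\<in>?I. cc j)" unfolding cc_def by (rule sum.cong[OF refl card_filter_sum[OF finite_atLeastAtMost, symmetric]])
  finally have sums: "(\<Sum>i\<in>?I. rc i) = (\<Sum>j\<in>?I. cc j)" .
  have "(\<Sum>i\<in>?I. rc i) = (\<Sum>i\<in>?I. 1)" using rc1 by (rule sum.cong[OF refl])
  then have sumN: "(\<Sum>j\<in>?I. cc j) = (\<Sum>j\<in>?I. 1)" using sums by simp
  have ccle: "cc j \<le> 1" if j: "j \<in> ?I" for j
  proof (rule ccontr)
    assume "\<not> cc j \<le> 1"
    then have "1 < cc j" by simp
    then have "(\<Sum>j\<in>?I. 1) < (\<Sum>j\<in>?I. cc j)"
      using cc1 j by (intro sum_strict_mono_ex1[of ?I]) blast+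
    then show False using sumN by simp
  qed
  have "permutation_matrix N A"
    unfolding permutation_matrix_def
  proof (intro conjI ballI)
    show "zero_one_matrix N A" by (rule zo)
    fix i assume "i \<in> ?I" then show "card {j\<in>?I. A i j = 1} = 1" using rc1 unfolding rc_def by simp
  next
    fix j assume "j \<in> ?I" then show "card {i\<in>?I. A i j = 1} = 1" using cc1 ccle unfolding cc_def
      by (simp add: le_antisym)
  qed
  then show False using notperm by simp
qed

lemma double_wit:
  "\<exists>e U1 U2. \<forall>c\<in>{1..N}. U1 c \<in> X \<and> U2 c \<in> X \<and> U1 c 0 = c \<and> U2 c 0 = c \<and> U1 c \<noteq> U2 c
     \<and> (shift ^^ e) (U1 c) \<in> Tset \<and> (shift ^^ e) (U2 c) \<in> Tset"
proof -
  obtain g g1 g2 where g: "g \<in> {1..N}" "g1 \<in> {1..N}" "g2 \<in> {1..N}" "g1 \<noteq> g2" "A g g1 = 1" "A g g2 = 1"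
    using branch by blast
  have "\<forall>c\<in>{1..N}. \<exists>qf. fst qf > 0 \<and> snd qf 0 = c \<and> snd qf (fst qf) = g \<and>
      (\<forall>t\<le>fst qf. snd qf t \<in> {1..N}) \<and> (\<forall>t<fst qf. A (snd qf t) (snd qf (Suc t)) = 1)"
  proof
    fix c assume c: "c \<in> {1..N}"
    from path[OF c g(1)] obtain q f where "q > 0 \<and> f 0 = c \<and> f q = g \<and> (\<forall>t\<le>q. f t \<in> {1..N}) \<and> (\<forall>t<q. A (f t) (f (Suc t)) = 1)"
      by blast
    then show "\<exists>qf. fst qf > 0 \<and> snd qf 0 = c \<and> snd qf (fst qf) = g \<and>
      (\<forall>t\<le>fst qf. snd qf t \<in> {1..N}) \<and> (\<forall>t<fst qf. A (snd qf t) (snd qf (Suc t)) = 1)"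
      by (intro exI[of _ "(q, f)"]) simp
  qed
  then obtain QF where QF: "\<forall>c\<in>{1..N}. fst (QF c) > 0 \<and> snd (QF c) 0 = c \<and> snd (QF c) (fst (QF c)) = g \<and>
      (\<forall>t\<le>fst (QF c). snd (QF c) t \<in> {1..N}) \<and> (\<forall>t<fst (QF c). A (snd (QF c) t) (snd (QF c) (Suc t)) = 1)"
    by (rule bchoice[elim_format]) blast
  define qf where "qf c = fst (QF c)" for c
  define pf where "pf c = snd (QF c)" for c
  define e where "e = Suc (Max (qf ` {1..N}))"
  define w where "w k = cat 1 (\<lambda>t. if t = 0 then g else k) (pt k)" for k
  have w_in: "w k \<in> X" if k: "k \<in> {1..N}" "A g k = 1" for k
    unfolding w_def by (rule cat_in) (use k g(1) pt_in[OF k(1)] in auto)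
  have w0: "w k 0 = g" for k by (simp add: w_def cat_def)
  have w1: "(shift ^^ 1) (w k) = pt k" for k unfolding w_def by (rule shift_cat)
  define U where "U k c = cat (qf c) (pf c) (w k)" for k c
  have Uprops: "U k c \<in> X \<and> U k c 0 = c \<and> (shift ^^ (qf c)) (U k c) = w k \<and> (shift ^^ e) (U k c) \<in> Tset"
    if k: "k \<in> {1..N}" "A g k = 1" and c: "c \<in> {1..N}" for k c
  proof -
    have q: "qf c > 0" "pf c 0 = c" "pf c (qf c) = g" "\<forall>t\<le>qf c. pf c t \<in> {1..N}"
      "\<forall>t<qf c. A (pf c t) (pf c (Suc t)) = 1"
      using QF c unfolding qf_def pf_def by auto
    have in1: "U k c \<in> X" unfolding U_def
      by (rule cat_in) (use q w_in[OF k] w0 in auto)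
    have u0: "U k c 0 = c" using q(1,2) by (simp add: U_def cat_def)
    have s1: "(shift ^^ (qf c)) (U k c) = w k" unfolding U_def by (rule shift_cat)
    have "qf c \<le> Max (qf ` {1..N})" using c by simp
    then have qe: "qf c < e" unfolding e_def by simp
    define d where "d = e - Suc (qf c)"
    have ed: "e = d + (1 + qf c)" using qe unfolding d_def by simp
    have "(shift ^^ e) (U k c) = (shift ^^ d) ((shift ^^ 1) ((shift ^^ (qf c)) (U k c)))"
      unfolding ed funpow_add o_apply ..
    also have "\<dots> = (shift ^^ d) (pt k)" unfolding s1 w1 ..
    finally have "(shift ^^ e) (U k c) \<in> Tset" using pt_Tset[OF k(1)] by simp
    then show ?thesis using in1 u0 s1 by simp
  qed
  have "\<forall>c\<in>{1..N}. U g1 c \<in> X \<and> U g2 c \<in> X \<and> U g1 c 0 = c \<and> U g2 c 0 = c \<and> U g1 c \<noteq> U g2 c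
     \<and> (shift ^^ e) (U g1 c) \<in> Tset \<and> (shift ^^ e) (U g2 c) \<in> Tset"
  proof
    fix c assume c: "c \<in> {1..N}"
    note P1 = Uprops[OF g(2) g(5) c] and P2 = Uprops[OF g(3) g(6) c]
    have "U g1 c \<noteq> U g2 c"
    proof
      assume "U g1 c = U g2 c"
      then have "(shift ^^ 1) ((shift ^^ (qf c)) (U g1 c)) = (shift ^^ 1) ((shift ^^ (qf c)) (U g2 c))" by simp
      then have "pt g1 = pt g2" using P1 P2 w1 by simp
      then have "pt g1 0 = pt g2 0" by simp
      then show False using g(4) by simp
    qed
    then show "U g1 c \<in> X \<and> U g2 c \<in> X \<and> U g1 c 0 = c \<and> U g2 c 0 = c \<and> U g1 c \<noteq> U g2 c
     \<and> (shift ^^ e) (U g1 c) \<in> Tset \<and> (shift ^^ e) (U g2 c) \<in> Tset" using P1 P2 by simp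
  qed
  then show ?thesis by blast
qed

lemma growth: "\<exists>G. \<forall>b\<in>{1..N}. \<forall>v\<in>{1..N}. \<forall>t D. G \<le> D \<longrightarrow> W v t < W b (t + D)"
proof -
  obtain e U1 U2 where U: "\<forall>c\<in>{1..N}. U1 c \<in> X \<and> U2 c \<in> X \<and> U1 c 0 = c \<and> U2 c 0 = c \<and> U1 c \<noteq> U2 c
     \<and> (shift ^^ e) (U1 c) \<in> Tset \<and> (shift ^^ e) (U2 c) \<in> Tset"
    using double_wit by blast
  let ?P = "{1..N} \<times> {1..N}"
  have "\<forall>bv\<in>?P. \<exists>qf. fst qf > 0 \<and> snd qf 0 = fst bv \<and> snd qf (fst qf) = snd bv \<and>
      (\<forall>t\<le>fst qf. snd qf t \<in> {1..N}) \<and> (\<forall>t<fst qf. A (snd qf t) (snd qf (Suc t)) = 1)"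
  proof
    fix bv assume bv: "bv \<in> ?P"
    then have "fst bv \<in> {1..N}" "snd bv \<in> {1..N}" by auto
    from path[OF this] obtain q f where "q > 0 \<and> f 0 = fst bv \<and> f q = snd bv \<and> (\<forall>t\<le>q. f t \<in> {1..N}) \<and> (\<forall>t<q. A (f t) (f (Suc t)) = 1)"
      by blast
    then show "\<exists>qf. fst qf > 0 \<and> snd qf 0 = fst bv \<and> snd qf (fst qf) = snd bv \<and>
      (\<forall>t\<le>fst qf. snd qf t \<in> {1..N}) \<and> (\<forall>t<fst qf. A (snd qf t) (snd qf (Suc t)) = 1)"
      by (intro exI[of _ "(q, f)"]) simp
  qed
  then obtain QF where QF: "\<forall>bv\<in>?P. fst (QF bv) > 0 \<and> snd (QF bv) 0 = fst bv \<and> snd (QF bv) (fst (QF bv)) = snd bv \<and>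
      (\<forall>t\<le>fst (QF bv). snd (QF bv) t \<in> {1..N}) \<and> (\<forall>t<fst (QF bv). A (snd (QF bv) t) (snd (QF bv) (Suc t)) = 1)"
    by (rule bchoice[elim_format]) blast
  define Q where "Q = Max ((\<lambda>bv. fst (QF bv)) ` ?P)"
  have "W v t < W b (t + D)" if b: "b \<in> {1..N}" and v: "v \<in> {1..N}" and D: "Q + e \<le> D" for b v t D
  proof -
    have bv: "(b, v) \<in> ?P" using b v by simp
    define q where "q = fst (QF (b, v))"
    define f where "f = snd (QF (b, v))"
    have f: "f 0 = b" "f q = v" "\<forall>t\<le>q. f t \<in> {1..N}" "\<forall>t<q. A (f t) (f (Suc t)) = 1"
      using QF bv unfolding q_def f_def by auto
    have qQ: "q \<le> Q" unfolding Q_def q_def using bv by simp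
    have "W v t < 2 * W v t" using W_pos[OF v, of t] by simp
    also have "\<dots> \<le> W v (t + e)" by (rule W_double[OF U])
    also have "\<dots> \<le> W b (q + (t + e))" by (rule W_path[OF f])
    also have "\<dots> \<le> W b (t + D)" by (rule W_mono) (use qQ D in simp)
    finally show ?thesis .
  qed
  then show ?thesis by blast
qed

lemma cyl_count:
  assumes y: "y \<in> X"
  shows "card {z\<in>X. agr (Suc m) z y \<and> (shift ^^ (m + t)) z \<in> Tset} = W (y m) t"
proof -
  let ?S = "{z\<in>X. agr (Suc m) z y \<and> (shift ^^ (m + t)) z \<in> Tset}"
  have fa: "(shift ^^ (m + t)) z = (shift ^^ t) ((shift ^^ m) z)" for z
    by (simp only: add.commute[of m t] funpow_add o_apply)
  have inj: "inj_on (shift ^^ m) ?S"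
  proof (rule inj_onI)
    fix z z' assume z: "z \<in> ?S" and z': "z' \<in> ?S" and e: "(shift ^^ m) z = (shift ^^ m) z'"
    have "agr m z y" "agr m z' y" using z z' agr_mono by fastforce+
    then have "agr m z z'" using agr_trans agr_sym by blast
    then have "cat m z ((shift ^^ m) z) = cat m z' ((shift ^^ m) z')" using e cat_agr_eq by metis
    then show "z = z'" unfolding cat_shift_self .
  qed
  have "(shift ^^ m) ` ?S = Wset (y m) t"
  proof
    show "(shift ^^ m) ` ?S \<subseteq> Wset (y m) t"
    proof
      fix u assume "u \<in> (shift ^^ m) ` ?S"
      then obtain z where z: "z \<in> ?S" "u = (shift ^^ m) z" by blast
      have "u \<in> X" using z shift_space_funpow by blast
      moreover have "u 0 = y m" using z by (simp add: funpow_shift_apply agr_def)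
      moreover have "(shift ^^ t) u \<in> Tset" using z fa by simp
      ultimately show "u \<in> Wset (y m) t" unfolding Wset_def by simp
    qed
    show "Wset (y m) t \<subseteq> (shift ^^ m) ` ?S"
    proof
      fix u assume u: "u \<in> Wset (y m) t"
      then have uX: "u \<in> X" and u0: "u 0 = y m" and ut: "(shift ^^ t) u \<in> Tset"
        unfolding Wset_def by auto
      define z where "z = cat m y u"
      have "z \<in> X" unfolding z_def by (rule cat_in_point[OF y uX u0])
      moreover have "agr (Suc m) z y" unfolding agr_def z_def cat_def using u0 less_Suc_eq by auto
      moreover have sz: "(shift ^^ m) z = u" unfolding z_def by (rule shift_cat)
      moreover have "(shift ^^ (m + t)) z \<in> Tset" using fa sz ut by simp
      ultimately show "u \<in> (shift ^^ m) ` ?S" by blast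
    qed
  qed
  then show ?thesis unfolding W_def using card_image[OF inj] by simp
qed

end


definition sumf :: "((nat \<Rightarrow> nat) \<Rightarrow> nat) \<Rightarrow> nat \<Rightarrow> (nat \<Rightarrow> nat) \<Rightarrow> nat" where
  "sumf f n x = (\<Sum>i<n. f ((shift ^^ i) x))"

lemma sumf_Suc: "sumf f (Suc n) x = sumf f n x + f ((shift ^^ n) x)"
  by (simp add: sumf_def)

lemma funpow_add_apply: "(f ^^ (a + b)) z = (f ^^ a) ((f ^^ b) z)"
  by (simp add: funpow_add)

lemma funpow_swap_apply: "(f ^^ a) ((f ^^ b) z) = (f ^^ b) ((f ^^ a) z)"
  by (metis funpow_add_apply add.commute)

lemma iter_rel:
  assumes rel: "\<forall>x\<in>shift_space N A. (shift ^^ k1 x) (h (shift x)) = (shift ^^ l1 x) (h x)"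
    and x: "x \<in> shift_space N A"
  shows "(shift ^^ sumf k1 n x) (h ((shift ^^ n) x)) = (shift ^^ sumf l1 n x) (h x)"
proof (induction n)
  case 0 then show ?case by (simp add: sumf_def)
next
  case (Suc n)
  define y where "y = (shift ^^ n) x"
  have y: "y \<in> shift_space N A" unfolding y_def using shift_space_funpow[OF x] .
  have sy: "(shift ^^ Suc n) x = shift y" unfolding y_def by simp
  have "(shift ^^ sumf k1 (Suc n) x) (h ((shift ^^ Suc n) x))
      = (shift ^^ sumf k1 n x) ((shift ^^ k1 y) (h (shift y)))"
    unfolding sumf_Suc sy y_def[symmetric] funpow_add_apply ..
  also have "\<dots> = (shift ^^ sumf k1 n x) ((shift ^^ l1 y) (h y))"
    using rel y by simp
  also have "\<dots> = (shift ^^ l1 y) ((shift ^^ sumf k1 n x) (h y))"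
    by (rule funpow_swap_apply)
  also have "\<dots> = (shift ^^ l1 y) ((shift ^^ sumf l1 n x) (h x))"
    using Suc.IH unfolding y_def by simp
  also have "\<dots> = (shift ^^ sumf l1 (Suc n) x) (h x)"
    unfolding sumf_Suc y_def[symmetric] funpow_add_apply by (rule funpow_swap_apply)
  finally show ?case .
qed

locale sft2 = a: sft N A + b: sft M B for N A M B
begin

lemma key:
  assumes hom: "homeomorphism (shift_space N A) (shift_space M B) h h'"
    and ck: "continuous_on (shift_space N A) k1" and cl: "continuous_on (shift_space N A) l1"
    and rel: "\<forall>x\<in>shift_space N A. (shift ^^ k1 x) (h (shift x)) = (shift ^^ l1 x) (h x)"
  shows "\<exists>n>0. \<forall>x\<in>shift_space N A. sumf k1 n x < sumf l1 n x"
proof -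
  let ?XA = "shift_space N A" and ?XB = "shift_space M B"
  have hXA: "\<forall>x\<in>?XA. h x \<in> ?XB" and h'XB: "\<forall>y\<in>?XB. h' y \<in> ?XA"
    and hh': "\<forall>x\<in>?XA. h' (h x) = x" and h'h: "\<forall>y\<in>?XB. h (h' y) = y"
    and hc: "continuous_on ?XA h" and h'c: "continuous_on ?XB h'"
    using hom unfolding homeomorphism_def by auto
  have hinj: "inj_on h ?XA" by (rule inj_on_inverseI[of _ h']) (use hh' in auto)
  have h'inj: "inj_on h' ?XB" by (rule inj_on_inverseI[of _ h]) (use h'h in auto)
  obtain Rk where Rk: "\<forall>x\<in>?XA. \<forall>z\<in>?XA. agr Rk z x \<longrightarrow> k1 z = k1 x" using locconst[OF ck] by blast
  obtain Rl where Rl: "\<forall>x\<in>?XA. \<forall>z\<in>?XA. agr Rl z x \<longrightarrow> l1 z = l1 x" using locconst[OF cl] by blast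
  define R where "R = max (max Rk Rl) 1"
  have R1: "R \<ge> 1" unfolding R_def by simp
  have sum_eq: "sumf k1 n z = sumf k1 n x \<and> sumf l1 n z = sumf l1 n x"
    if x: "x \<in> ?XA" and z: "z \<in> ?XA" and a: "agr (n + R) z x" for x z n
  proof -
    have "k1 ((shift ^^ i) z) = k1 ((shift ^^ i) x) \<and> l1 ((shift ^^ i) z) = l1 ((shift ^^ i) x)" if i: "i < n" for i
    proof -
      have ag: "agr R ((shift ^^ i) z) ((shift ^^ i) x)" using agr_shift[OF a] i by simp
      have "agr Rk ((shift ^^ i) z) ((shift ^^ i) x)" "agr Rl ((shift ^^ i) z) ((shift ^^ i) x)"
        using agr_mono[OF ag] unfolding R_def by auto
      then show ?thesis using Rk Rl shift_space_funpow[OF x] shift_space_funpow[OF z] by blast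
    qed
    then show ?thesis unfolding sumf_def by (auto intro: sum.cong)
  qed
  obtain r0 where r0: "\<forall>y\<in>?XB. \<forall>z\<in>?XB. agr r0 z y \<longrightarrow> agr R (h' z) (h' y)"
    using unif_cont[OF h'c] by blast
  define r where "r = max r0 1"
  have r1: "r \<ge> 1" unfolding r_def by simp
  obtain G where G: "\<forall>bb\<in>{1..M}. \<forall>v\<in>{1..M}. \<forall>t D. G \<le> D \<longrightarrow> b.W v t < b.W bb (t + D)"
    using b.growth by blast
  define \<rho> where "\<rho> = r + G"
  obtain n0 where n0: "\<forall>x\<in>?XA. \<forall>u\<in>?XA. agr n0 u x \<longrightarrow> agr \<rho> (h u) (h x)"
    using unif_cont[OF hc] by blast
  define n where "n = max n0 1"
  have "sumf k1 n x < sumf l1 n x" if x: "x \<in> ?XA" for x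
  proof (rule ccontr)
    assume "\<not> sumf k1 n x < sumf l1 n x"
    then have KL: "sumf l1 n x \<le> sumf k1 n x" by simp
    define K where "K = sumf k1 n x"
    define L where "L = sumf l1 n x"
    define a where "a = \<rho> + L"
    define bn where "bn = \<rho> + K"
    have xn: "(shift ^^ n) x \<in> ?XA" using shift_space_funpow[OF x] .
    define SW where "SW = {u\<in>?XA. agr (n + R) u x \<and> (shift ^^ a) (h u) \<in> b.Tset}"
    define SW' where "SW' = {u\<in>?XA. agr R u ((shift ^^ n) x) \<and> (shift ^^ bn) (h u) \<in> b.Tset}"
    have comp: "(shift ^^ bn) (h ((shift ^^ n) u)) = (shift ^^ a) (h u)"
      if u: "u \<in> ?XA" "agr (n + R) u x" for u
    proof -
      have se: "sumf k1 n u = K" "sumf l1 n u = L" using sum_eq[OF x u] unfolding K_def L_def by auto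
      have "(shift ^^ bn) (h ((shift ^^ n) u)) = (shift ^^ \<rho>) ((shift ^^ sumf k1 n u) (h ((shift ^^ n) u)))"
        unfolding bn_def se funpow_add_apply ..
      also have "\<dots> = (shift ^^ \<rho>) ((shift ^^ sumf l1 n u) (h u))"
        using iter_rel[OF rel u(1)] by simp
      also have "\<dots> = (shift ^^ a) (h u)"
        unfolding a_def se funpow_add_apply ..
      finally show ?thesis .
    qed
    have inj: "inj_on (shift ^^ n) SW"
    proof (rule inj_onI)
      fix u u' assume u: "u \<in> SW" and u': "u' \<in> SW" and e: "(shift ^^ n) u = (shift ^^ n) u'"
      have "agr n u x" "agr n u' x" using u u' agr_mono unfolding SW_def by fastforce+
      then have "agr n u u'" using agr_trans agr_sym by blast
      then have "cat n u ((shift ^^ n) u) = cat n u' ((shift ^^ n) u')" using e cat_agr_eq by simp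
      then show "u = u'" unfolding cat_shift_self .
    qed
    have img: "(shift ^^ n) ` SW = SW'"
    proof
      show "(shift ^^ n) ` SW \<subseteq> SW'"
      proof
        fix w assume "w \<in> (shift ^^ n) ` SW"
        then obtain u where u: "u \<in> SW" "w = (shift ^^ n) u" by blast
        have uX: "u \<in> ?XA" and ua: "agr (n + R) u x" and ut: "(shift ^^ a) (h u) \<in> b.Tset"
          using u(1) unfolding SW_def by auto
        have "w \<in> ?XA" using u(2) shift_space_funpow[OF uX] by simp
        moreover have "agr R w ((shift ^^ n) x)" using agr_shift[OF ua, of n] u(2) by simp
        moreover have "(shift ^^ bn) (h w) \<in> b.Tset" using comp[OF uX ua] ut u(2) by simp
        ultimately show "w \<in> SW'" unfolding SW'_def by simp
      qed
      show "SW' \<subseteq> (shift ^^ n) ` SW"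
      proof
        fix w assume w: "w \<in> SW'"
        have wX: "w \<in> ?XA" and wa: "agr R w ((shift ^^ n) x)" and wt: "(shift ^^ bn) (h w) \<in> b.Tset"
          using w unfolding SW'_def by auto
        have w0: "w 0 = x n" using wa R1 by (simp add: agr_def funpow_shift_apply)
        define u where "u = cat n x w"
        have uX: "u \<in> ?XA" unfolding u_def by (rule cat_in_point[OF x wX w0])
        have ua: "agr (n + R) u x"
          unfolding agr_def
        proof (intro allI impI)
          fix i assume i: "i < n + R"
          show "u i = x i"
          proof (cases "i < n")
            case True then show ?thesis by (simp add: u_def cat_def)
          next
            case False
            then have "i - n < R" using i by simp
            then have "w (i - n) = x (i - n + n)" using wa by (simp add: agr_def funpow_shift_apply)
            then show ?thesis using False by (simp add: u_def cat_def)
          qed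
        qed
        have su: "(shift ^^ n) u = w" unfolding u_def by (rule shift_cat)
        have "(shift ^^ a) (h u) \<in> b.Tset" using comp[OF uX ua] su wt by simp
        then have "u \<in> SW" unfolding SW_def using uX ua by simp
        then show "w \<in> (shift ^^ n) ` SW" using su by blast
      qed
    qed
    have c1: "card SW = card SW'" using card_image[OF inj] img by simp
    have xB: "h x \<in> ?XB" using hXA x by simp
    have xnB: "h ((shift ^^ n) x) \<in> ?XB" using hXA xn by simp
    define Prho where "Prho = {z\<in>?XB. agr (Suc (\<rho> - 1)) z (h x) \<and> (shift ^^ ((\<rho> - 1) + (L + 1))) z \<in> b.Tset}"
    define Pr where "Pr = {z\<in>?XB. agr (Suc (r - 1)) z (h ((shift ^^ n) x)) \<and> (shift ^^ ((r - 1) + (G + K + 1))) z \<in> b.Tset}"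
    have rho1: "Suc (\<rho> - 1) = \<rho>" "(\<rho> - 1) + (L + 1) = a" unfolding \<rho>_def a_def using r1 by auto
    have r1': "Suc (r - 1) = r" "(r - 1) + (G + K + 1) = bn" unfolding \<rho>_def bn_def using r1 by auto
    have finB: "finite Prho" unfolding Prho_def
      by (rule finite_subset[OF _ b.finite_SS[of "(\<rho> - 1) + (L + 1)"]]) blast
    have c2: "card SW \<le> card Prho"
    proof (rule card_inj_on_le[OF _ _ finB])
      show "inj_on h SW" using hinj by (rule inj_on_subset) (auto simp: SW_def)
      show "h ` SW \<subseteq> Prho"
      proof
        fix w assume "w \<in> h ` SW"
        then obtain u where u: "u \<in> SW" "w = h u" by blast
        have uX: "u \<in> ?XA" and ua: "agr (n + R) u x" and ut: "(shift ^^ a) (h u) \<in> b.Tset"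
          using u(1) unfolding SW_def by auto
        have "agr n0 u x" using agr_mono[OF ua] unfolding n_def by simp
        then have "agr \<rho> (h u) (h x)" using n0 x uX by blast
        then show "w \<in> Prho" unfolding Prho_def rho1 using u(2) ut hXA uX by simp
      qed
    qed
    have finSW': "finite SW'"
    proof -
      have "h ` SW' \<subseteq> {z\<in>?XB. (shift ^^ bn) z \<in> b.Tset}" unfolding SW'_def using hXA by auto
      then have "finite (h ` SW')" using b.finite_SS finite_subset by blast
      moreover have "inj_on h SW'" using hinj by (rule inj_on_subset) (auto simp: SW'_def)
      ultimately show ?thesis using finite_imageD by blast
    qed
    have c3: "card Pr \<le> card SW'"
    proof (rule card_inj_on_le[OF _ _ finSW'])
      show "inj_on h' Pr" using h'inj by (rule inj_on_subset) (auto simp: Pr_def)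
      show "h' ` Pr \<subseteq> SW'"
      proof
        fix w assume "w \<in> h' ` Pr"
        then obtain z where z: "z \<in> Pr" "w = h' z" by blast
        have zX: "z \<in> ?XB" and za: "agr r z (h ((shift ^^ n) x))" and zt: "(shift ^^ bn) z \<in> b.Tset"
          using z(1) unfolding Pr_def r1' by auto
        have "agr r0 z (h ((shift ^^ n) x))" using agr_mono[OF za] unfolding r_def by simp
        then have "agr R (h' z) (h' (h ((shift ^^ n) x)))" using r0 zX xnB by blast
        then have "agr R w ((shift ^^ n) x)" using hh' xn z(2) by simp
        moreover have "w \<in> ?XA" using h'XB zX z(2) by simp
        moreover have "(shift ^^ bn) (h w) \<in> b.Tset" using h'h zX z(2) zt by simp
        ultimately show "w \<in> SW'" unfolding SW'_def by simp
      qed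
    qed
    have e1: "card Prho = b.W (h x (\<rho> - 1)) (L + 1)"
      unfolding Prho_def by (rule b.cyl_count[OF xB])
    have e2: "card Pr = b.W (h ((shift ^^ n) x) (r - 1)) (G + K + 1)"
      unfolding Pr_def by (rule b.cyl_count[OF xnB])
    have v1: "h x (\<rho> - 1) \<in> {1..M}" using shift_space_D[OF xB] .
    have v2: "h ((shift ^^ n) x) (r - 1) \<in> {1..M}" using shift_space_D[OF xnB] .
    have "G \<le> G + (K - L)" by simp
    then have "b.W (h x (\<rho> - 1)) (L + 1) < b.W (h ((shift ^^ n) x) (r - 1)) ((L + 1) + (G + (K - L)))"
      using G v1 v2 by blast
    moreover have "(L + 1) + (G + (K - L)) = G + K + 1" using KL unfolding K_def L_def by simp
    ultimately have "card Prho < card Pr" using e1 e2 by simp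
    then show False using c1 c2 c3 by simp
  qed
  moreover have "n > 0" unfolding n_def by simp
  ultimately show ?thesis by blast
qed

end


lemma funpow_shift_cont: "continuous_on S (shift ^^ i)"
proof -
  have e: "(shift ^^ i) = (\<lambda>x k. x (k + i))" by (rule ext) (simp add: funpow_shift)
  show ?thesis unfolding e
    by (intro continuous_on_coordinatewise_then_product continuous_on_product_coordinates[THEN continuous_on_subset]) simp
qed

lemma cont_Min:
  fixes f :: "nat \<Rightarrow> 'a::topological_space \<Rightarrow> 'b::linorder_topology"
  assumes "\<And>j. continuous_on S (f j)"
  shows "continuous_on S (\<lambda>x. Min ((\<lambda>j. f j x) ` {..<Suc n}))"
proof (induction n)
  case 0
  have z: "{..<Suc 0} = {0::nat}" by auto
  have e: "(\<lambda>x. Min ((\<lambda>j. f j x) ` {..<Suc 0})) = f 0" unfolding z by (rule ext) simp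
  show ?case unfolding e by (rule assms)
next
  case (Suc n)
  have "Min ((\<lambda>j. f j x) ` {..<Suc (Suc n)}) = min (f (Suc n) x) (Min ((\<lambda>j. f j x) ` {..<Suc n}))" for x
  proof -
    have "(\<lambda>j. f j x) ` {..<Suc (Suc n)} = insert (f (Suc n) x) ((\<lambda>j. f j x) ` {..<Suc n})"
      by (simp add: lessThan_Suc)
    moreover have ne: "(\<lambda>j. f j x) ` {..<Suc n} \<noteq> {}" by auto
    ultimately show ?thesis using Min_insert[OF finite_imageI[OF finite_lessThan] ne] by simp
  qed
  then show ?case using continuous_on_min[OF assms Suc.IH] by simp
qed

lemma cont_binop:
  fixes f :: "(nat \<Rightarrow> nat) \<Rightarrow> 'b::discrete_topology" and g :: "(nat \<Rightarrow> nat) \<Rightarrow> 'c::discrete_topology"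
  assumes "continuous_on (shift_space N A) f" "continuous_on (shift_space N A) g"
  shows "continuous_on (shift_space N A) (\<lambda>x. H (f x) (g x) :: 'd::topological_space)"
proof -
  obtain nf where nf: "\<forall>x\<in>shift_space N A. \<forall>z\<in>shift_space N A. agr nf z x \<longrightarrow> f z = f x"
    using locconst[OF assms(1)] by blast
  obtain ng where ng: "\<forall>x\<in>shift_space N A. \<forall>z\<in>shift_space N A. agr ng z x \<longrightarrow> g z = g x"
    using locconst[OF assms(2)] by blast
  show ?thesis unfolding continuous_on_topological
  proof (intro ballI allI impI)
    fix x B assume x: "x \<in> shift_space N A" and B: "open B" "H (f x) (g x) \<in> B"
    show "\<exists>Aa. open Aa \<and> x \<in> Aa \<and> (\<forall>y\<in>shift_space N A. y \<in> Aa \<longrightarrow> H (f y) (g y) \<in> B)"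
    proof (intro exI[of _ "{z. agr (max nf ng) z x}"] conjI ballI impI)
      show "open {z. agr (max nf ng) z x}" by (rule agr_open)
      show "x \<in> {z. agr (max nf ng) z x}" by simp
      fix y assume y: "y \<in> shift_space N A" "y \<in> {z. agr (max nf ng) z x}"
      then have "agr nf y x" "agr ng y x" using agr_mono by fastforce+
      then have "f y = f x" "g y = g x" using nf ng x y(1) by blast+
      then show "H (f y) (g y) \<in> B" using B by simp
    qed
  qed
qed

definition Fsum :: "((nat \<Rightarrow> nat) \<Rightarrow> int) \<Rightarrow> nat \<Rightarrow> (nat \<Rightarrow> nat) \<Rightarrow> int" where
  "Fsum F j x = (\<Sum>i<j. F ((shift ^^ i) x))"

lemma Fsum_Suc: "Fsum F (Suc j) x = F x + Fsum F j (shift x)"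
  unfolding Fsum_def sum.lessThan_Suc_shift by (simp add: funpow_Suc_right funpow_swap1)

lemma Fsum_cont:
  assumes "continuous_on (shift_space N A) F"
  shows "continuous_on (shift_space N A) (Fsum F j)"
proof -
  have "continuous_on (shift_space N A) (\<lambda>x. F ((shift ^^ i) x))" for i
    by (rule continuous_on_compose2[OF assms funpow_shift_cont]) (auto intro: shift_space_funpow)
  then show ?thesis unfolding Fsum_def by (intro continuous_on_sum) auto
qed

lemma pos_cone_from_sum:
  assumes cF: "continuous_on (shift_space N A) F" and N0: "N0 > 0"
    and pos: "\<forall>x\<in>shift_space N A. Fsum F N0 x \<ge> 0"
  shows "in_pos_cone (shift_space N A) F"
proof -
  let ?X = "shift_space N A"
  obtain n0 where n0: "N0 = Suc n0" using N0 by (cases N0) auto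
  define u where "u x = Min ((\<lambda>j. Fsum F j x) ` {..<N0})" for x
  have cu: "continuous_on ?X u" unfolding u_def n0
    by (rule cont_Min) (rule Fsum_cont[OF cF])
  have cus: "continuous_on ?X (\<lambda>x. u (shift x))"
    by (rule continuous_on_compose2[OF cu shift_continuous]) (auto intro: shift_space_shift)
  define g where "g x = F x - u x + u (shift x)" for x
  have "continuous_on ?X (\<lambda>x. F x - u x)" by (rule cont_binop[OF cF cu])
  then have cg: "continuous_on ?X g" unfolding g_def by (rule cont_binop[OF _ cus])
  have fin: "finite ((\<lambda>j. Fsum F j x) ` {..<N0})" for x by simp
  have ne: "(\<lambda>j. Fsum F j x) ` {..<N0} \<noteq> {}" for x using N0 by auto
  have gpos: "g x \<ge> 0" if x: "x \<in> ?X" for x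
  proof -
    obtain j0 where j0: "j0 < N0" "u (shift x) = Fsum F j0 (shift x)"
      using Min_in[OF fin ne, of "shift x"] unfolding u_def by auto
    have "u x \<le> Fsum F (Suc j0) x"
    proof (cases "Suc j0 < N0")
      case True then show ?thesis unfolding u_def by (intro Min_le fin) auto
    next
      case False
      then have "Suc j0 = N0" using j0 by simp
      then have "Fsum F (Suc j0) x \<ge> 0" using pos x by simp
      moreover have "u x \<le> Fsum F 0 x" unfolding u_def using N0 by (intro Min_le fin) auto
      moreover have "Fsum F 0 x = 0" by (simp add: Fsum_def)
      ultimately show ?thesis by simp
    qed
    then have "u x \<le> F x + u (shift x)" using j0(2) Fsum_Suc[of F j0 x] by simp
    then show ?thesis unfolding g_def by simp
  qed
  have "cohomologous ?X F g"
    unfolding cohomologous_def by (intro exI[of _ u] conjI cu) (simp add: g_def)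
  then show ?thesis unfolding in_pos_cone_def using cg gpos by blast
qed

lemma order_unit_from_sum:
  assumes cc: "continuous_on (shift_space N A) c" and N0: "N0 > 0"
    and pos: "\<forall>x\<in>shift_space N A. Fsum c N0 x \<ge> 1"
  shows "order_unit (shift_space N A) c"
proof -
  let ?X = "shift_space N A"
  have "in_pos_cone ?X c" by (rule pos_cone_from_sum[OF cc N0]) (use pos in force)
  moreover have "\<exists>n::nat. in_pos_cone ?X (\<lambda>x. int n * c x - g x)" if cg: "continuous_on ?X g" for g
  proof -
    obtain Bd :: int where Bd: "Bd \<ge> 0" "\<forall>x\<in>?X. g x \<le> Bd"
    proof (cases "?X = {}")
      case True then show ?thesis using that[of 0] by simp
    next
      case False
      have "compact (g ` ?X)" by (rule compact_continuous_image[OF cg shift_space_compact])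
      from compact_attains_sup[OF this] False obtain s where "s \<in> g ` ?X" "\<forall>t\<in>g ` ?X. t \<le> s" by auto
      then have "\<forall>x\<in>?X. g x \<le> max s 0" by fastforce
      then show ?thesis by (intro that[of "max s 0"]) auto
    qed
    define n where "n = nat (int N0 * Bd)"
    have nn: "int n = int N0 * Bd" unfolding n_def using Bd(1) by simp
    define F where "F x = int n * c x - g x" for x
    have cF: "continuous_on ?X F" unfolding F_def
      by (rule cont_binop[OF cc cg])
    have "Fsum F N0 x \<ge> 0" if x: "x \<in> ?X" for x
    proof -
      have "Fsum F N0 x = int n * Fsum c N0 x - Fsum g N0 x"
        unfolding Fsum_def F_def by (simp add: sum_subtractf sum_distrib_left)
      moreover have "Fsum g N0 x \<le> int N0 * Bd"
      proof -
        have "Fsum g N0 x \<le> (\<Sum>i<N0. Bd)" unfolding Fsum_def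
          by (rule sum_mono) (use Bd(2) shift_space_funpow[OF x] in blast)
        then show ?thesis by simp
      qed
      moreover have "int n * Fsum c N0 x \<ge> int n" using pos x by (simp add: mult_le_cancel_left1)
      ultimately show ?thesis using nn by simp
    qed
    then have "in_pos_cone ?X F" by (intro pos_cone_from_sum[OF cF N0]) blast
    then show ?thesis unfolding F_def by blast
  qed
  ultimately show ?thesis unfolding order_unit_def using cc by blast
qed


lemma rel_trans: "(p, q) \<in> susp_rel X l k b \<Longrightarrow> (q, w) \<in> susp_rel X l k b \<Longrightarrow> (p, w) \<in> susp_rel X l k b"
  using susp_rel_equiv[of X b l k] unfolding equiv_def trans_def by blast

lemma rel_sym: "(p, q) \<in> susp_rel X l k b \<Longrightarrow> (q, p) \<in> susp_rel X l k b"
  using susp_rel_equiv[of X b l k] unfolding equiv_def sym_def by blast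

lemma rel_refl: "p \<in> susp_domain X b \<Longrightarrow> (p, p) \<in> susp_rel X l k b"
  unfolding susp_rel_def by blast

lemma rel_dom: "(p, q) \<in> susp_rel X l k b \<Longrightarrow> p \<in> susp_domain X b \<and> q \<in> susp_domain X b"
  unfolding susp_rel_def by blast

lemma gen_rel:
  assumes "x \<in> X" "r \<ge> b x" "r \<ge> l x" "(shift x, r - (l x - k x)) \<in> susp_domain X b"
  shows "((x, r), (shift x, r - (l x - k x))) \<in> susp_rel X l k b"
proof -
  have "((x, r), (shift x, r - (l x - k x))) \<in> susp_gen X l k b"
    unfolding susp_gen_def susp_domain_def using assms(1-3) by blast
  then have "((x, r), (shift x, r - (l x - k x))) \<in> (susp_gen X l k b \<union> (susp_gen X l k b)\<inverse>)\<^sup>*"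
    by blast
  moreover have "(x, r) \<in> susp_domain X b" unfolding susp_domain_def using assms(1,2) by simp
  ultimately show ?thesis unfolding susp_rel_def using assms(4) by blast
qed

lemma std_shift:
  assumes "y \<in> shift_space N A" "s \<ge> 0"
  shows "((y, s + real n), ((shift ^^ n) y, s)) \<in> susp_rel (shift_space N A) (\<lambda>_. 1) (\<lambda>_. 0) (\<lambda>_. 0)"
  using assms(1)
proof (induction n arbitrary: y)
  case 0
  have "(y, s) \<in> susp_domain (shift_space N A) (\<lambda>_. 0)" unfolding susp_domain_def using 0 assms(2) by simp
  then show ?case using rel_refl by simp
next
  case (Suc n)
  have sy: "shift y \<in> shift_space N A" using shift_space_shift[OF Suc.prems] .
  have e: "s + real (Suc n) - (1 - 0) = s + real n" by simp
  have "(shift y, s + real (Suc n) - (1 - 0)) \<in> susp_domain (shift_space N A) (\<lambda>_. 0)"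
    unfolding e susp_domain_def using sy assms(2) by simp
  then have dom: "(shift y, s + real (Suc n) - (1 - 0)) \<in> susp_domain (shift_space N A) (\<lambda>_. 0)" .
  have "((y, s + real (Suc n)), (shift y, s + real (Suc n) - (1 - 0))) \<in> susp_rel (shift_space N A) (\<lambda>_. 1) (\<lambda>_. 0) (\<lambda>_. 0)"
    by (rule gen_rel[where l="\<lambda>_. 1" and k="\<lambda>_. 0" and b="\<lambda>_. 0"]) (use Suc.prems assms(2) dom in auto)
  then have r1: "((y, s + real (Suc n)), (shift y, s + real n)) \<in> susp_rel (shift_space N A) (\<lambda>_. 1) (\<lambda>_. 0) (\<lambda>_. 0)"
    using assms(2) unfolding e by simp
  have "(shift ^^ n) (shift y) = (shift ^^ Suc n) y" by (simp add: funpow_swap1)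
  then show ?case using rel_trans[OF r1 Suc.IH[OF sy]] by simp
qed

lemma coe_half:
  fixes h h' :: "(nat \<Rightarrow> nat) \<Rightarrow> (nat \<Rightarrow> nat)" and k1 l1 :: "(nat \<Rightarrow> nat) \<Rightarrow> nat"
  assumes hom: "homeomorphism (shift_space N A) (shift_space M B) h h'"
    and ck: "continuous_on (shift_space N A) k1" and cl: "continuous_on (shift_space N A) l1"
    and rel: "\<forall>x\<in>shift_space N A. (shift ^^ k1 x) (h (shift x)) = (shift ^^ l1 x) (h x)"
    and ou: "order_unit (shift_space N A) (\<lambda>x. int (l1 x) - int (k1 x))"
  shows "\<exists>l k b \<Phi>. susp_triplet (shift_space N A) l k b \<and>
       continuous_map (suspension (shift_space N A) l k b) (std_susp (shift_space M B)) \<Phi> \<and>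
       (\<forall>t\<ge>0. \<forall>p\<in>topspace (suspension (shift_space N A) l k b).
          \<Phi> (susp_flow (shift_space N A) l k b t p) = std_flow (shift_space M B) t (\<Phi> p)) \<and>
       (\<forall>x\<in>shift_space N A. \<Phi> (susp_class (shift_space N A) l k b x (b x)) = std_base (shift_space M B) (h x))"
proof -
  let ?XA = "shift_space N A" and ?XB = "shift_space M B"
  define l where "l x = real (l1 x)" for x
  define k where "k x = real (k1 x)" for x
  define b0 where "b0 = (\<lambda>_::nat\<Rightarrow>nat. 0::real)"
  have hXA: "\<forall>x\<in>?XA. h x \<in> ?XB" and hc: "continuous_on ?XA h"
    using hom unfolding homeomorphism_def by auto
  have cr: "continuous_on UNIV (real :: nat \<Rightarrow> real)" by (rule Topological_Spaces.continuous_on_discrete)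
  have trip: "susp_triplet ?XA l k b0"
    unfolding susp_triplet_def
  proof (intro conjI)
    show "continuous_on ?XA l" unfolding l_def by (rule continuous_on_compose2[OF cr cl]) simp
    show "continuous_on ?XA k" unfolding k_def by (rule continuous_on_compose2[OF cr ck]) simp
    show "continuous_on ?XA b0" unfolding b0_def by (rule continuous_on_const)
    show "\<forall>x\<in>?XA. 0 \<le> l x \<and> 0 \<le> k x" unfolding l_def k_def by simp
    show "\<exists>c. (\<forall>x\<in>?XA. l x - k x = real_of_int (c x)) \<and> order_unit ?XA c"
      by (intro exI[of _ "\<lambda>x. int (l1 x) - int (k1 x)"] conjI ou) (simp add: l_def k_def)
    show "\<forall>x\<in>?XA. l x - b0 x \<in> \<nat> \<and> k x - b0 (shift x) \<in> \<nat>"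
      unfolding l_def k_def b0_def by simp
  qed
  let ?EA = "susp_rel ?XA l k b0" and ?DA = "susp_domain ?XA b0"
  let ?EB = "susp_rel ?XB (\<lambda>_. 1) (\<lambda>_. 0) (\<lambda>_. 0)" and ?DB = "susp_domain ?XB (\<lambda>_. 0)"
  define H where "H p = (h (fst p), snd p)" for p :: "(nat \<Rightarrow> nat) \<times> real"
  have DAi: "(x, r) \<in> ?DA \<longleftrightarrow> x \<in> ?XA \<and> r \<ge> 0" for x r unfolding susp_domain_def b0_def by simp
  have DBi: "(y, r) \<in> ?DB \<longleftrightarrow> y \<in> ?XB \<and> r \<ge> 0" for y r unfolding susp_domain_def by simp
  have HD: "H p \<in> ?DB" if "p \<in> ?DA" for p
    using that hXA DAi DBi unfolding H_def by (cases p) auto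
  have C1: "((h x, r), (h (shift x), r - (l x - k x))) \<in> ?EB" if x: "x \<in> ?XA" and r: "r \<ge> l x" for x r
  proof -
    define s where "s = r - l x"
    have s0: "s \<ge> 0" using r unfolding s_def by simp
    have hx: "h x \<in> ?XB" "h (shift x) \<in> ?XB" using hXA x shift_space_shift by auto
    have a1: "((h x, s + real (l1 x)), ((shift ^^ l1 x) (h x), s)) \<in> ?EB" by (rule std_shift[OF hx(1) s0])
    have a2: "((h (shift x), s + real (k1 x)), ((shift ^^ k1 x) (h (shift x)), s)) \<in> ?EB"
      by (rule std_shift[OF hx(2) s0])
    have e1: "s + real (l1 x) = r" unfolding s_def l_def by simp
    have e2: "s + real (k1 x) = r - (l x - k x)" unfolding s_def l_def k_def by simp
    have e3: "(shift ^^ k1 x) (h (shift x)) = (shift ^^ l1 x) (h x)" using rel x by simp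
    have a2': "(((shift ^^ l1 x) (h x), s), (h (shift x), s + real (k1 x))) \<in> ?EB"
      using rel_sym[OF a2] e3 by simp
    show ?thesis using rel_trans[OF a1 a2'] e1 e2 by simp
  qed
  have C2: "(H p, H q) \<in> ?EB \<and> q \<in> ?DA"
    if pq: "(p, q) \<in> (susp_gen ?XA l k b0 \<union> (susp_gen ?XA l k b0)\<inverse>)\<^sup>*" and p: "p \<in> ?DA" for p q
    using pq
  proof (induction rule: rtrancl_induct)
    case base then show ?case using rel_refl HD[OF p] p by simp
  next
    case (step y z)
    have yD: "y \<in> ?DA" using step.IH by simp
    have edge: "(H u, H w) \<in> ?EB \<and> w \<in> ?DA" if uw: "(u, w) \<in> susp_gen ?XA l k b0" for u w
    proof -
      from uw obtain x r where xr: "u = (x, r)" "w = (shift x, r - (l x - k x))" "(x, r) \<in> ?DA" "r \<ge> l x"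
        unfolding susp_gen_def by blast
      have x: "x \<in> ?XA" using xr(3) DAi by simp
      have "r - (l x - k x) \<ge> 0" using xr(4) unfolding k_def by simp
      then have "w \<in> ?DA" using xr(2) DAi shift_space_shift[OF x] by simp
      moreover have "(H u, H w) \<in> ?EB" using C1[OF x xr(4)] xr(1,2) unfolding H_def by simp
      ultimately show ?thesis by simp
    qed
    have "(H y, H z) \<in> ?EB \<and> z \<in> ?DA"
    proof (cases "(y, z) \<in> susp_gen ?XA l k b0")
      case True then show ?thesis using edge by blast
    next
      case False
      then have "(z, y) \<in> susp_gen ?XA l k b0" using step.hyps(2) by blast
      then have "(H z, H y) \<in> ?EB" "z \<in> ?DA" using edge unfolding susp_gen_def by blast+
      then show ?thesis using rel_sym by blast
    qed
    then show ?case using rel_trans step.IH by blast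
  qed
  have C3: "(H p, H q) \<in> ?EB" if "(p, q) \<in> ?EA" for p q
    using C2[of p q] that unfolding susp_rel_def by blast
  define \<Phi> where "\<Phi> P = ?EB `` (H ` P)" for P
  have C4: "\<Phi> (susp_class ?XA l k b0 x r) = susp_class ?XB (\<lambda>_. 1) (\<lambda>_. 0) (\<lambda>_. 0) (h x) r"
    if xr: "(x, r) \<in> ?DA" for x r
  proof
    show "susp_class ?XB (\<lambda>_. 1) (\<lambda>_. 0) (\<lambda>_. 0) (h x) r \<subseteq> \<Phi> (susp_class ?XA l k b0 x r)"
    proof -
      have "(x, r) \<in> susp_class ?XA l k b0 x r" by (rule susp_class_self[OF xr])
      then have "(h x, r) \<in> H ` susp_class ?XA l k b0 x r" unfolding H_def by force
      then show ?thesis unfolding \<Phi>_def susp_class_def by blast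
    qed
    show "\<Phi> (susp_class ?XA l k b0 x r) \<subseteq> susp_class ?XB (\<lambda>_. 1) (\<lambda>_. 0) (\<lambda>_. 0) (h x) r"
    proof
      fix z assume "z \<in> \<Phi> (susp_class ?XA l k b0 x r)"
      then obtain p where p: "p \<in> susp_class ?XA l k b0 x r" "(H p, z) \<in> ?EB"
        unfolding \<Phi>_def by blast
      have "((x, r), p) \<in> ?EA" by (rule susp_class_mem[OF p(1)])
      then have "(H (x, r), H p) \<in> ?EB" by (rule C3)
      then have "((h x, r), H p) \<in> ?EB" by (simp add: H_def)
      then have "((h x, r), z) \<in> ?EB" by (rule rel_trans[OF _ p(2)])
      then show "z \<in> susp_class ?XB (\<lambda>_. 1) (\<lambda>_. 0) (\<lambda>_. 0) (h x) r"
        unfolding susp_class_def by simp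
    qed
  qed
  have cls: "\<exists>x r. (x, r) \<in> ?DA \<and> P = susp_class ?XA l k b0 x r" if "P \<in> ?DA // ?EA" for P
  proof -
    from that obtain q where q: "P = ?EA `` {q}" "q \<in> ?DA" by (rule quotientE)
    obtain x r where "q = (x, r)" by (cases q)
    then show ?thesis using q unfolding susp_class_def by blast
  qed
  have cont: "continuous_map (suspension ?XA l k b0) (std_susp ?XB) \<Phi>"
    unfolding continuous_map_def
  proof (intro conjI allI impI)
    show "\<Phi> \<in> topspace (suspension ?XA l k b0) \<rightarrow> topspace (std_susp ?XB)"
    proof
      fix P assume "P \<in> topspace (suspension ?XA l k b0)"
      then obtain x r where xr: "(x, r) \<in> ?DA" "P = susp_class ?XA l k b0 x r"
        using cls unfolding topspace_suspension by blast
      have "(h x, r) \<in> ?DB" using HD[OF xr(1)] unfolding H_def by simp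
      then show "\<Phi> P \<in> topspace (std_susp ?XB)" using C4[OF xr(1)] xr(2) susp_class_in_top by metis
    qed
    fix U assume U: "openin (std_susp ?XB) U"
    then have U1: "U \<subseteq> ?DB // ?EB" and U2: "openin (top_of_set ?DB) (\<Union>U)"
      unfolding openin_suspension by auto
    let ?S = "{P \<in> topspace (suspension ?XA l k b0). \<Phi> P \<in> U}"
    have eq: "\<Union>?S = ?DA \<inter> H -` (\<Union>U)"
    proof
      show "\<Union>?S \<subseteq> ?DA \<inter> H -` (\<Union>U)"
      proof
        fix q assume "q \<in> \<Union>?S"
        then obtain P where P: "P \<in> ?S" "q \<in> P" by blast
        then obtain x r where xr: "(x, r) \<in> ?DA" "P = susp_class ?XA l k b0 x r"
          using cls unfolding topspace_suspension by blast
        have "((x, r), q) \<in> ?EA" using susp_class_mem P(2) xr(2) by metis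
        then have qD: "q \<in> ?DA" and "P = susp_class ?XA l k b0 (fst q) (snd q)"
          using rel_dom susp_class_eq xr(2) by (metis prod.collapse)+
        then have "\<Phi> P = susp_class ?XB (\<lambda>_. 1) (\<lambda>_. 0) (\<lambda>_. 0) (h (fst q)) (snd q)"
          using C4[of "fst q" "snd q"] by simp
        moreover have "H q \<in> susp_class ?XB (\<lambda>_. 1) (\<lambda>_. 0) (\<lambda>_. 0) (h (fst q)) (snd q)"
          using susp_class_self HD[OF qD] unfolding H_def by (metis prod.collapse fst_conv snd_conv)
        ultimately have "H q \<in> \<Union>U" using P(1) by blast
        then show "q \<in> ?DA \<inter> H -` (\<Union>U)" using qD by simp
      qed
      show "?DA \<inter> H -` (\<Union>U) \<subseteq> \<Union>?S"
      proof
        fix q assume q: "q \<in> ?DA \<inter> H -` (\<Union>U)"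
        obtain x r where xr: "q = (x, r)" by (cases q)
        have qD: "(x, r) \<in> ?DA" using q xr by simp
        from q obtain Q where Q: "Q \<in> U" "H q \<in> Q" by blast
        then obtain w where w: "Q = ?EB `` {w}" "w \<in> ?DB" using U1 by (blast elim: quotientE)
        have "(w, (h x, r)) \<in> ?EB" using Q(2) w(1) xr unfolding H_def by simp
        then have "Q = susp_class ?XB (\<lambda>_. 1) (\<lambda>_. 0) (\<lambda>_. 0) (h x) r"
          using susp_class_eq[of "fst w" "snd w"] w(1) unfolding susp_class_def by simp
        then have "\<Phi> (susp_class ?XA l k b0 x r) \<in> U" using C4[OF qD] Q(1) by simp
        moreover have "susp_class ?XA l k b0 x r \<in> topspace (suspension ?XA l k b0)"
          by (rule susp_class_in_top[OF qD])
        moreover have "q \<in> susp_class ?XA l k b0 x r" using susp_class_self[OF qD] xr by simp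
        ultimately show "q \<in> \<Union>?S" by blast
      qed
    qed
    have Hpi: "H \<in> ?DA \<rightarrow> ?DB" using HD by blast
    have cH: "continuous_on ?DA H"
    proof -
      have "continuous_on ?DA (\<lambda>p. h (fst p))"
        by (rule continuous_on_compose2[OF hc continuous_on_fst]) (auto simp: susp_domain_def)
      then show ?thesis unfolding H_def by (intro continuous_on_Pair continuous_on_snd) auto
    qed
    have "openin (top_of_set ?DA) (?DA \<inter> H -` (\<Union>U))"
      using cH U2 unfolding continuous_on_open_gen[OF Hpi] by blast
    then have "openin (top_of_set ?DA) (\<Union>?S)" using eq by simp
    moreover have "?S \<subseteq> ?DA // ?EA" unfolding topspace_suspension by blast
    ultimately show "openin (suspension ?XA l k b0) ?S" unfolding openin_suspension by simp
  qed
  have flow: "\<forall>t\<ge>0. \<forall>P\<in>topspace (suspension ?XA l k b0).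
          \<Phi> (susp_flow ?XA l k b0 t P) = std_flow ?XB t (\<Phi> P)"
  proof (intro allI impI ballI)
    fix t :: real and P assume t: "t \<ge> 0" and P: "P \<in> topspace (suspension ?XA l k b0)"
    then obtain x r where xr: "(x, r) \<in> ?DA" "P = susp_class ?XA l k b0 x r"
      using cls unfolding topspace_suspension by blast
    have xr': "(x, r + t) \<in> ?DA" using xr(1) t DAi by simp
    have hD: "(h x, r) \<in> ?DB" using HD[OF xr(1)] unfolding H_def by simp
    have "\<Phi> (susp_flow ?XA l k b0 t P) = \<Phi> (susp_class ?XA l k b0 x (r + t))"
      using susp_flow_class[OF xr(1) t] xr(2) by simp
    also have "\<dots> = susp_class ?XB (\<lambda>_. 1) (\<lambda>_. 0) (\<lambda>_. 0) (h x) (r + t)" by (rule C4[OF xr'])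
    also have "\<dots> = std_flow ?XB t (susp_class ?XB (\<lambda>_. 1) (\<lambda>_. 0) (\<lambda>_. 0) (h x) r)"
      using susp_flow_class[OF hD t] by simp
    also have "\<dots> = std_flow ?XB t (\<Phi> P)" using C4[OF xr(1)] xr(2) by simp
    finally show "\<Phi> (susp_flow ?XA l k b0 t P) = std_flow ?XB t (\<Phi> P)" .
  qed
  have base: "\<forall>x\<in>?XA. \<Phi> (susp_class ?XA l k b0 x (b0 x)) = std_base ?XB (h x)"
  proof
    fix x assume x: "x \<in> ?XA"
    have "(x, 0) \<in> ?DA" using x DAi by simp
    then show "\<Phi> (susp_class ?XA l k b0 x (b0 x)) = std_base ?XB (h x)"
      using C4 unfolding b0_def by simp
  qed
  show ?thesis using trip cont flow base by blast
qed


lemma fe_intro: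
  assumes t1: "susp_triplet (shift_space N A) l1 k1 b1" and t2: "susp_triplet (shift_space M B) l2 k2 b2"
    and hom: "homeomorphism (shift_space N A) (shift_space M B) h h'"
    and c1: "continuous_map (suspension (shift_space N A) l1 k1 b1) (std_susp (shift_space M B)) \<Phi>1"
    and c2: "continuous_map (suspension (shift_space M B) l2 k2 b2) (std_susp (shift_space N A)) \<Phi>2"
    and f1: "\<forall>t\<ge>0. \<forall>p\<in>topspace (suspension (shift_space N A) l1 k1 b1).
          \<Phi>1 (susp_flow (shift_space N A) l1 k1 b1 t p) = std_flow (shift_space M B) t (\<Phi>1 p)"
    and f2: "\<forall>t\<ge>0. \<forall>p\<in>topspace (suspension (shift_space M B) l2 k2 b2).
          \<Phi>2 (susp_flow (shift_space M B) l2 k2 b2 t p) = std_flow (shift_space N A) t (\<Phi>2 p)"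
    and bb1: "\<forall>x\<in>shift_space N A. \<Phi>1 (susp_class (shift_space N A) l1 k1 b1 x (b1 x)) = std_base (shift_space M B) (h x)"
    and bb2: "\<forall>y\<in>shift_space M B. \<Phi>2 (susp_class (shift_space M B) l2 k2 b2 y (b2 y)) = std_base (shift_space N A) (h' y)"
  shows "one_sided_flow_equiv N A M B"
  unfolding one_sided_flow_equiv_def Let_def
  apply (rule exI[of _ l1])
  apply (rule exI[of _ k1])
  apply (rule exI[of _ b1])
  apply (rule exI[of _ l2])
  apply (rule exI[of _ k2])
  apply (rule exI[of _ b2])
  apply (rule exI[of _ h])
  apply (rule exI[of _ h'])
  apply (rule exI[of _ \<Phi>1])
  apply (rule exI[of _ \<Phi>2])
  using assms by simp

lemma coe_order_unit:
  assumes "admissible_matrix N A" "admissible_matrix M B"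
    and hom: "homeomorphism (shift_space N A) (shift_space M B) h h'"
    and ck: "continuous_on (shift_space N A) k1" and cl: "continuous_on (shift_space N A) l1"
    and rel: "\<forall>x\<in>shift_space N A. (shift ^^ k1 x) (h (shift x)) = (shift ^^ l1 x) (h x)"
  shows "order_unit (shift_space N A) (\<lambda>x. int (l1 x) - int (k1 x))"
proof -
  interpret s: sft2 N A M B by unfold_locales (rule assms)+
  obtain n where n: "n > 0" "\<forall>x\<in>shift_space N A. sumf k1 n x < sumf l1 n x"
    using s.key[OF hom ck cl rel] by blast
  show ?thesis
  proof (rule order_unit_from_sum[OF _ n(1)])
    show "continuous_on (shift_space N A) (\<lambda>x. int (l1 x) - int (k1 x))"
      by (rule cont_binop[OF cl ck])
    show "\<forall>x\<in>shift_space N A. 1 \<le> Fsum (\<lambda>x. int (l1 x) - int (k1 x)) n x"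
    proof
      fix x assume x: "x \<in> shift_space N A"
      have "Fsum (\<lambda>x. int (l1 x) - int (k1 x)) n x = int (sumf l1 n x) - int (sumf k1 n x)"
        unfolding Fsum_def sumf_def by (simp add: sum_subtractf)
      then show "1 \<le> Fsum (\<lambda>x. int (l1 x) - int (k1 x)) n x" using n(2) x by force
    qed
  qed
qed

lemma coe_imp_fe:
  assumes "admissible_matrix N A" "admissible_matrix M B" "cont_orbit_equiv N A M B"
  shows "one_sided_flow_equiv N A M B"
proof -
  let ?XA = "shift_space N A" and ?XB = "shift_space M B"
  from assms(3) obtain h h' and k1 l1 :: "(nat \<Rightarrow> nat) \<Rightarrow> nat" and k2 l2 :: "(nat \<Rightarrow> nat) \<Rightarrow> nat" where
    hom: "homeomorphism ?XA ?XB h h'" and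
    c: "continuous_on ?XA k1" "continuous_on ?XA l1" "continuous_on ?XB k2" "continuous_on ?XB l2" and
    r1: "\<forall>x\<in>?XA. (shift ^^ k1 x) (h (shift x)) = (shift ^^ l1 x) (h x)" and
    r2: "\<forall>y\<in>?XB. (shift ^^ k2 y) (h' (shift y)) = (shift ^^ l2 y) (h' y)"
    unfolding cont_orbit_equiv_def Let_def by (elim exE conjE) (rule that; assumption)
  have hom': "homeomorphism ?XB ?XA h' h" using hom by (rule homeomorphism_symD)
  have ou1: "order_unit ?XA (\<lambda>x. int (l1 x) - int (k1 x))"
    by (rule coe_order_unit[OF assms(1,2) hom c(1,2) r1])
  have ou2: "order_unit ?XB (\<lambda>x. int (l2 x) - int (k2 x))"
    by (rule coe_order_unit[OF assms(2,1) hom' c(3,4) r2])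
  obtain L1 K1 B1 \<Phi>1 where A1: "susp_triplet ?XA L1 K1 B1"
    "continuous_map (suspension ?XA L1 K1 B1) (std_susp ?XB) \<Phi>1"
    "\<forall>t\<ge>0. \<forall>p\<in>topspace (suspension ?XA L1 K1 B1).
          \<Phi>1 (susp_flow ?XA L1 K1 B1 t p) = std_flow ?XB t (\<Phi>1 p)"
    "\<forall>x\<in>?XA. \<Phi>1 (susp_class ?XA L1 K1 B1 x (B1 x)) = std_base ?XB (h x)"
    using coe_half[OF hom c(1,2) r1 ou1] by blast
  obtain L2 K2 B2 \<Phi>2 where A2: "susp_triplet ?XB L2 K2 B2"
    "continuous_map (suspension ?XB L2 K2 B2) (std_susp ?XA) \<Phi>2"
    "\<forall>t\<ge>0. \<forall>p\<in>topspace (suspension ?XB L2 K2 B2).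
          \<Phi>2 (susp_flow ?XB L2 K2 B2 t p) = std_flow ?XA t (\<Phi>2 p)"
    "\<forall>y\<in>?XB. \<Phi>2 (susp_class ?XB L2 K2 B2 y (B2 y)) = std_base ?XA (h' y)"
    using coe_half[OF hom' c(3,4) r2 ou2] by blast
  show ?thesis by (rule fe_intro[OF A1(1) A2(1) hom A1(2) A2(2) A1(3) A2(3) A1(4) A2(4)])
qed

theorem theorem3p4:
  fixes N M :: nat and A B :: "nat \<Rightarrow> nat \<Rightarrow> nat"
  assumes "admissible_matrix N A" and "admissible_matrix M B"
  shows "one_sided_flow_equiv N A M B \<longleftrightarrow> cont_orbit_equiv N A M B"
  using fe_imp_coe coe_imp_fe[OF assms] by blast


end
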